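(* Every $3$-dimensional superbialgebra $A=A_0\oplus A_1$ over $\mathbb{K}$ with $\dim A_0=2$ is isomorphic to exactly one of the following eleven pairwise non-isomorphic superbialgebras. In all of them $x$ is even, $y$ is odd, $\{1,x,y\}$ is a basis, $\Delta(1)=1\otimes 1$, $\varepsilon(1)=1$, $\varepsilon(y)=0$, and the underlying superalgebras are $A_{2|1}=\mathbb{K}[x,y]/(x^2-x,y^2-x,xy-y)$, $A_{2|2}=\mathbb{K}\langle x,y\rangle/(x^2-x,y^2,xy-y,yx)$, $A_{2|3}=\mathbb{K}[x,y]/(x^2-x,y^2,xy-y)$. On $A_{2|1}$: (1) $\Delta(x)=1\otimes x+x\otimes 1-x\otimes x$, $\Delta(y)=y\otimes 1+1\otimes y-y\otimes x$, $\varepsilon(x)=0$; (2) the co-opposite of (1). On $A_{2|2}$: (3) $\Delta(x)=1\otimes x+x\otimes 1-x\otimes x$, $\Delta(y)=1\otimes y+y\otimes 1-y\otimes x-x\otimes y$, $\varepsilon(x)=0$; (4) $\Delta(x)=1\otimes x+x\otimes 1-x\otimes x+y\otimes y$, $\Delta(y)=1\otimes y+y\otimes 1-y\otimes x-x\otimes y$, $\varepsilon(x)=0$; (5) $\Delta(x)=x\otimes x$, $\Delta(y)=y\otimes x+x\otimes y$, $\varepsilon(x)=1$; (6) $\Delta(x)=x\otimes x+y\otimes y$, $\Delta(y)=y\otimes x+x\otimes y$, $\varepsilon(x)=1$. On $A_{2|3}$: (7) $\Delta(x)=1\otimes x+x\otimes 1-x\otimes x$, $\Delta(y)=1\otimes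 y+y\otimes 1-x\otimes y-y\otimes x$, $\varepsilon(x)=0$; (8) $\Delta(x)=1\otimes x+x\otimes 1-x\otimes x$, $\Delta(y)=1\otimes y+y\otimes 1-x\otimes y$, $\varepsilon(x)=0$; (9) the co-opposite of (8); (10) $\Delta(x)=1\otimes x+x\otimes 1-x\otimes x$, $\Delta(y)=y\otimes 1+1\otimes y$, $\varepsilon(x)=0$; (11) $\Delta(x)=x\otimes x$, $\Delta(y)=y\otimes x+x\otimes y$, $\varepsilon(x)=1$.
   Context: $\mathbb{K}$ is an algebraically closed field of characteristic $0$. A superalgebra is an associative unital $\mathbb{K}$-algebra $A=A_0\oplus A_1$ with a $\mathbb{Z}/2\mathbb{Z}$-grading such that $A_iA_j\subseteq A_{i+j}$ and $1\in A_0$; $|a|$ denotes the degree. $A\otimes A$ has product $(a\otimes b)(c\otimes d)=(-1)^{|b||c|}ac\otimes bd$. A superbialgebra is a superalgebra with even linear maps $\Delta:A\to A\otimes A$, $\varepsilon:A\to\mathbb{K}$ ($\mathbb{K}$ in degree $0$) which are coassociative and counital and are unital algebra homomorphisms. An isomorphism of superbialgebras is an even linear bijection preserving product, unit, coproduct and counit. The co-opposite of a superbialgebra $(A,\Delta,\varepsilon)$ is $(A,\tau\circ\Delta,\varepsilon)$ with the super flip $\tau(a\otimes b)=(-1)^{|a||b|}b\otimes a$. $\mathbb{K}[x,y]/I$ is a quotient of the commutative polynomial ring, $\mathbb{K}\langle x,y\rangle/I$ of the free associative algebra. *)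

theory Defs
  imports "HOL-Computational_Algebra.Polynomial"
begin

text \<open>
  A superbialgebra of dimension 3 with even part of dimension 2 is encoded by its
  structure constants with respect to a homogeneous basis e0, e1, e2, where e0, e1
  span the even part and e2 spans the odd part.  Indices range over 0, 1, 2.
  mu i j k: coefficient of e_k in e_i e_j;  un k: coefficient of e_k in the unit;
  co k i j: coefficient of e_i (x) e_j in Delta(e_k);  cu k: counit of e_k.
\<close>

record 'a sbd =
  mu :: "nat \<Rightarrow> nat \<Rightarrow> nat \<Rightarrow> 'a"
  un :: "nat \<Rightarrow> 'a"
  co :: "nat \<Rightarrow> nat \<Rightarrow> nat \<Rightarrow> 'a"
  cu :: "nat \<Rightarrow> 'a"

definition par :: "nat \<Rightarrow> nat" where
  "par i = (if i = 2 then 1 else 0)"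

definition ksign :: "nat \<Rightarrow> nat \<Rightarrow> 'a::ring_1" where
  "ksign i j = (if par i = 1 \<and> par j = 1 then -1 else 1)"

definition kd :: "nat \<Rightarrow> nat \<Rightarrow> 'a::ring_1" where
  "kd i j = (if i = j then 1 else 0)"

definition superbialg3 :: "'a::field sbd \<Rightarrow> bool" where
  "superbialg3 A \<longleftrightarrow>
    \<comment> \<open>grading: product, unit, coproduct and counit are even\<close>
    (\<forall>i<3. \<forall>j<3. \<forall>k<3. mu A i j k \<noteq> 0 \<longrightarrow> par k = (par i + par j) mod 2) \<and>
    un A 2 = 0 \<and>
    (\<forall>k<3. \<forall>i<3. \<forall>j<3. co A k i j \<noteq> 0 \<longrightarrow> (par i + par j) mod 2 = par k) \<and>
    cu A 2 = 0 \<and>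
    \<comment> \<open>associativity\<close>
    (\<forall>i<3. \<forall>j<3. \<forall>l<3. \<forall>n<3.
       (\<Sum>k<3. mu A i j k * mu A k l n) = (\<Sum>k<3. mu A j l k * mu A i k n)) \<and>
    \<comment> \<open>unit\<close>
    (\<forall>i<3. \<forall>k<3. (\<Sum>j<3. un A j * mu A j i k) = kd i k \<and>
                   (\<Sum>j<3. un A j * mu A i j k) = kd i k) \<and>
    \<comment> \<open>coassociativity\<close>
    (\<forall>k<3. \<forall>a<3. \<forall>b<3. \<forall>c<3.
       (\<Sum>i<3. co A k i c * co A i a b) = (\<Sum>j<3. co A k a j * co A j b c)) \<and>
    \<comment> \<open>counit\<close>
    (\<forall>k<3. \<forall>j<3. (\<Sum>i<3. cu A i * co A k i j) = kd k j) \<and>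
    (\<forall>k<3. \<forall>i<3. (\<Sum>j<3. co A k i j * cu A j) = kd k i) \<and>
    \<comment> \<open>Delta and epsilon are unital\<close>
    (\<forall>i<3. \<forall>j<3. (\<Sum>k<3. un A k * co A k i j) = un A i * un A j) \<and>
    (\<Sum>k<3. un A k * cu A k) = 1 \<and>
    \<comment> \<open>epsilon multiplicative\<close>
    (\<forall>i<3. \<forall>j<3. (\<Sum>k<3. mu A i j k * cu A k) = cu A i * cu A j) \<and>
    \<comment> \<open>Delta multiplicative for the super tensor product algebra\<close>
    (\<forall>a<3. \<forall>b<3. \<forall>p<3. \<forall>q<3.
       (\<Sum>k<3. mu A a b k * co A k p q) =
       (\<Sum>i<3. \<Sum>j<3. \<Sum>l<3. \<Sum>m<3.
          co A a i j * co A b l m * ksign j l * mu A i l p * mu A j m q))"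

definition sb_iso :: "'a::field sbd \<Rightarrow> 'a sbd \<Rightarrow> bool" where
  "sb_iso A B \<longleftrightarrow> (\<exists>P :: nat \<Rightarrow> nat \<Rightarrow> 'a.
    (\<forall>i<3. \<forall>j<3. P i j \<noteq> 0 \<longrightarrow> par i = par j) \<and>
    (\<exists>Q :: nat \<Rightarrow> nat \<Rightarrow> 'a. \<forall>i<3. \<forall>k<3.
        (\<Sum>j<3. P i j * Q j k) = kd i k \<and> (\<Sum>j<3. Q i j * P j k) = kd i k) \<and>
    (\<forall>a<3. \<forall>b<3. \<forall>c<3.
       (\<Sum>k<3. mu A a b k * P k c) = (\<Sum>i<3. \<Sum>j<3. P a i * P b j * mu B i j c)) \<and>
    (\<forall>c<3. (\<Sum>k<3. un A k * P k c) = un B c) \<and>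
    (\<forall>a<3. \<forall>p<3. \<forall>q<3.
       (\<Sum>i<3. \<Sum>j<3. co A a i j * P i p * P j q) = (\<Sum>k<3. P a k * co B k p q)) \<and>
    (\<forall>a<3. (\<Sum>k<3. P a k * cu B k) = cu A a))"

definition coop :: "'a::field sbd \<Rightarrow> 'a sbd" where
  "coop A = A\<lparr>co := (\<lambda>k p q. ksign q p * co A k q p)\<rparr>"

text \<open>The eleven models; basis e0 = 1, e1 = x (even), e2 = y (odd).\<close>

definition bv :: "nat \<Rightarrow> nat \<Rightarrow> 'a::ring_1" where
  "bv k n = (if n = k then 1 else 0)"

definition tb :: "nat \<Rightarrow> nat \<Rightarrow> nat \<Rightarrow> nat \<Rightarrow> 'a::ring_1" where
  "tb i j p q = (if p = i \<and> q = j then 1 else 0)"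

text \<open>A_{2|1} = K[x,y]/(x^2-x, y^2-x, xy-y)\<close>
definition mul21 :: "nat \<Rightarrow> nat \<Rightarrow> nat \<Rightarrow> 'a::ring_1" where
  "mul21 i j = (if i = 0 then bv j else if j = 0 then bv i
     else if i = 1 \<and> j = 1 then bv 1 else if i = 1 \<and> j = 2 then bv 2
     else if i = 2 \<and> j = 1 then bv 2 else bv 1)"

text \<open>A_{2|2} = K<x,y>/(x^2-x, y^2, xy-y, yx)\<close>
definition mul22 :: "nat \<Rightarrow> nat \<Rightarrow> nat \<Rightarrow> 'a::ring_1" where
  "mul22 i j = (if i = 0 then bv j else if j = 0 then bv i
     else if i = 1 \<and> j = 1 then bv 1 else if i = 1 \<and> j = 2 then bv 2
     else (\<lambda>_. 0))"

text \<open>A_{2|3} = K[x,y]/(x^2-x, y^2, xy-y)\<close>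
definition mul23 :: "nat \<Rightarrow> nat \<Rightarrow> nat \<Rightarrow> 'a::ring_1" where
  "mul23 i j = (if i = 0 then bv j else if j = 0 then bv i
     else if i = 1 \<and> j = 1 then bv 1 else if i = 1 \<and> j = 2 then bv 2
     else if i = 2 \<and> j = 1 then bv 2 else (\<lambda>_. 0))"

definition mk :: "(nat \<Rightarrow> nat \<Rightarrow> nat \<Rightarrow> 'a::ring_1) \<Rightarrow> (nat \<Rightarrow> nat \<Rightarrow> 'a)
    \<Rightarrow> (nat \<Rightarrow> nat \<Rightarrow> 'a) \<Rightarrow> 'a \<Rightarrow> 'a sbd" where
  "mk m dx dy ex = \<lparr>mu = m, un = bv 0,
     co = (\<lambda>k. if k = 0 then tb 0 0 else if k = 1 then dx else dy),
     cu = (\<lambda>k. if k = 0 then 1 else if k = 1 then ex else 0)\<rparr>"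

definition dx0 :: "nat \<Rightarrow> nat \<Rightarrow> 'a::ring_1" where
  "dx0 p q = tb 0 1 p q + tb 1 0 p q - tb 1 1 p q"

definition model :: "nat \<Rightarrow> 'a::field sbd" where
  "model n =
    (if n = 1 then mk mul21 dx0 (\<lambda>p q. tb 2 0 p q + tb 0 2 p q - tb 2 1 p q) 0
     else if n = 2 then coop (mk mul21 dx0 (\<lambda>p q. tb 2 0 p q + tb 0 2 p q - tb 2 1 p q) 0)
     else if n = 3 then mk mul22 dx0
        (\<lambda>p q. tb 0 2 p q + tb 2 0 p q - tb 2 1 p q - tb 1 2 p q) 0
     else if n = 4 then mk mul22 (\<lambda>p q. dx0 p q + tb 2 2 p q)
        (\<lambda>p q. tb 0 2 p q + tb 2 0 p q - tb 2 1 p q - tb 1 2 p q) 0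
     else if n = 5 then mk mul22 (tb 1 1) (\<lambda>p q. tb 2 1 p q + tb 1 2 p q) 1
     else if n = 6 then mk mul22 (\<lambda>p q. tb 1 1 p q + tb 2 2 p q)
        (\<lambda>p q. tb 2 1 p q + tb 1 2 p q) 1
     else if n = 7 then mk mul23 dx0
        (\<lambda>p q. tb 0 2 p q + tb 2 0 p q - tb 1 2 p q - tb 2 1 p q) 0
     else if n = 8 then mk mul23 dx0 (\<lambda>p q. tb 0 2 p q + tb 2 0 p q - tb 1 2 p q) 0
     else if n = 9 then coop (mk mul23 dx0 (\<lambda>p q. tb 0 2 p q + tb 2 0 p q - tb 1 2 p q) 0)
     else if n = 10 then mk mul23 dx0 (\<lambda>p q. tb 2 0 p q + tb 0 2 p q) 0
     else mk mul23 (tb 1 1) (\<lambda>p q. tb 2 1 p q + tb 1 2 p q) 1)"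

end

theory Submission
  imports Defs
begin

lemma lt3: "{..<(3::nat)} = {0,1,2}" by auto
lemma sum3: "(\<Sum>i<(3::nat). f i) = f 0 + f 1 + f 2"
  by (simp add: lt3 add.assoc)
lemma all3: "(\<forall>i<(3::nat). P i) \<longleftrightarrow> P 0 \<and> P 1 \<and> P 2"
proof -
  have "(\<forall>i<(3::nat). P i) \<longleftrightarrow> (\<forall>i\<in>{..<3}. P i)" by auto
  also have "\<dots> \<longleftrightarrow> P 0 \<and> P 1 \<and> P 2" by (simp add: lt3)
  finally show ?thesis .
qed
lemma less3: "i < (3::nat) \<Longrightarrow> i = 0 \<or> i = 1 \<or> i = 2" by arith

lemma par_simps[simp]: "par 0 = 0" "par 1 = 0" "par 2 = 1" "par (Suc 0) = 0"
  by (simp_all add: par_def)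

lemma kd_sum_l: "i<3 \<Longrightarrow> (\<Sum>j<3. kd i j * f j) = (f i :: 'a::ring_1)"
  using less3[of i] by (auto simp: sum3 kd_def)
lemma kd_sum_r: "i<3 \<Longrightarrow> (\<Sum>j<3. f j * kd j i) = (f i :: 'a::ring_1)"
  using less3[of i] by (auto simp: sum3 kd_def)

lemma ksign_par: "par j = par j' \<Longrightarrow> par l = par l' \<Longrightarrow> ksign j l = ksign j' l'"
  by (simp add: ksign_def)

definition evenM :: "(nat \<Rightarrow> nat \<Rightarrow> 'a::ring_1) \<Rightarrow> bool" where
  "evenM P \<longleftrightarrow> (\<forall>i<3. \<forall>j<3. P i j \<noteq> 0 \<longrightarrow> par i = par j)"
definition inv3 :: "(nat \<Rightarrow> nat \<Rightarrow> 'a::ring_1) \<Rightarrow> (nat \<Rightarrow> nat \<Rightarrow> 'a) \<Rightarrow> bool" where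
  "inv3 P Q \<longleftrightarrow> (\<forall>i<3. \<forall>k<3. (\<Sum>j<3. P i j * Q j k) = kd i k \<and> (\<Sum>j<3. Q i j * P j k) = kd i k)"
definition isoM :: "'a::field sbd \<Rightarrow> 'a sbd \<Rightarrow> (nat \<Rightarrow> nat \<Rightarrow> 'a) \<Rightarrow> bool" where
  "isoM A B P \<longleftrightarrow> (\<forall>a<3. \<forall>b<3. \<forall>c<3.
       (\<Sum>k<3. mu A a b k * P k c) = (\<Sum>i<3. \<Sum>j<3. P a i * P b j * mu B i j c)) \<and>
    (\<forall>c<3. (\<Sum>k<3. un A k * P k c) = un B c) \<and>
    (\<forall>a<3. \<forall>p<3. \<forall>q<3.
       (\<Sum>i<3. \<Sum>j<3. co A a i j * P i p * P j q) = (\<Sum>k<3. P a k * co B k p q)) \<and>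
    (\<forall>a<3. (\<Sum>k<3. P a k * cu B k) = cu A a)"

lemma sb_iso_iff: "sb_iso A B \<longleftrightarrow> (\<exists>P. evenM P \<and> (\<exists>Q. inv3 P Q) \<and> isoM A B P)"
  unfolding sb_iso_def evenM_def inv3_def isoM_def by blast

lemma evenM_z: assumes "evenM P" shows "P 0 2 = 0" "P 1 2 = 0" "P 2 0 = 0" "P 2 1 = 0"
proof -
  have h: "\<And>i j. i<3 \<Longrightarrow> j<3 \<Longrightarrow> par i \<noteq> par j \<Longrightarrow> P i j = 0" using assms unfolding evenM_def by blast
  show "P 0 2 = 0" "P 1 2 = 0" "P 2 0 = 0" "P 2 1 = 0"
    using h[of 0 2] h[of 1 2] h[of 2 0] h[of 2 1] by simp_all
qed

context fixes dummy :: "'a::comm_ring_1" begin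
lemma sh_fb: fixes f g :: "nat \<Rightarrow> 'a" and h k X :: "nat \<Rightarrow> nat \<Rightarrow> 'a"
  shows "(\<Sum>a<3. \<Sum>b<3. f a * g b * (\<Sum>i<3. \<Sum>j<3. h a i * k b j * X i j)) = (\<Sum>i<3. \<Sum>j<3. (\<Sum>a<3. f a * h a i) * (\<Sum>b<3. g b * k b j) * X i j)"
  unfolding sum3 by (simp add: algebra_simps)
lemma sh_lin: fixes f X :: "nat \<Rightarrow> 'a" and h :: "nat \<Rightarrow> nat \<Rightarrow> 'a"
  shows "(\<Sum>a<3. f a * (\<Sum>j<3. h a j * X j)) = (\<Sum>j<3. (\<Sum>a<3. f a * h a j) * X j)"
  unfolding sum3 by (simp add: algebra_simps)
lemma sh_as1: fixes f g h :: "nat \<Rightarrow> 'a" and X :: "nat \<Rightarrow> nat \<Rightarrow> nat \<Rightarrow> 'a" and Y :: "nat \<Rightarrow> nat \<Rightarrow> 'a"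
  shows "(\<Sum>i<3. \<Sum>j<3. \<Sum>l<3. f i * g j * h l * (\<Sum>k<3. X i j k * Y k l)) = (\<Sum>k<3. \<Sum>l<3. (\<Sum>i<3. \<Sum>j<3. f i * g j * X i j k) * h l * Y k l)"
  unfolding sum3 by (simp add: algebra_simps)
lemma sh_as2: fixes M h :: "nat \<Rightarrow> 'a" and R Y :: "nat \<Rightarrow> nat \<Rightarrow> 'a"
  shows "(\<Sum>k<3. \<Sum>l<3. (\<Sum>k'<3. M k' * R k' k) * h l * Y k l) = (\<Sum>k'<3. M k' * (\<Sum>k<3. \<Sum>l<3. R k' k * h l * Y k l))"
  unfolding sum3 by (simp add: algebra_simps)
lemma sh_as3: fixes M R :: "nat \<Rightarrow> 'a" and N :: "nat \<Rightarrow> nat \<Rightarrow> 'a"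
  shows "(\<Sum>k'<3. M k' * (\<Sum>m<3. N k' m * R m)) = (\<Sum>m<3. (\<Sum>k'<3. M k' * N k' m) * R m)"
  unfolding sum3 by (simp add: algebra_simps)
lemma sh_as4: fixes f g h :: "nat \<Rightarrow> 'a" and X :: "nat \<Rightarrow> nat \<Rightarrow> nat \<Rightarrow> 'a" and Y :: "nat \<Rightarrow> nat \<Rightarrow> 'a"
  shows "(\<Sum>i<3. \<Sum>j<3. \<Sum>l<3. f i * g j * h l * (\<Sum>k<3. X j l k * Y i k)) = (\<Sum>i<3. \<Sum>k<3. f i * (\<Sum>j<3. \<Sum>l<3. g j * h l * X j l k) * Y i k)"
  unfolding sum3 by (simp add: algebra_simps)
lemma sh_as5: fixes f M :: "nat \<Rightarrow> 'a" and R Y :: "nat \<Rightarrow> nat \<Rightarrow> 'a"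
  shows "(\<Sum>i<3. \<Sum>k<3. f i * (\<Sum>k'<3. M k' * R k' k) * Y i k) = (\<Sum>k'<3. M k' * (\<Sum>i<3. \<Sum>k<3. f i * R k' k * Y i k))"
  unfolding sum3 by (simp add: algebra_simps)
lemma sh_u1: fixes f U :: "nat \<Rightarrow> 'a" and R X :: "nat \<Rightarrow> nat \<Rightarrow> 'a"
  shows "(\<Sum>i<3. f i * (\<Sum>j<3. (\<Sum>c<3. U c * R c j) * X j i)) = (\<Sum>c<3. U c * (\<Sum>j<3. \<Sum>i<3. R c j * f i * X j i))"
  unfolding sum3 by (simp add: algebra_simps)
lemma sh_u2: fixes f U :: "nat \<Rightarrow> 'a" and R X :: "nat \<Rightarrow> nat \<Rightarrow> 'a"
  shows "(\<Sum>i<3. f i * (\<Sum>j<3. (\<Sum>c<3. U c * R c j) * X i j)) = (\<Sum>c<3. U c * (\<Sum>i<3. \<Sum>j<3. f i * R c j * X i j))"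
  unfolding sum3 by (simp add: algebra_simps)
lemma sh_c1: fixes f Y :: "nat \<Rightarrow> 'a" and X :: "nat \<Rightarrow> nat \<Rightarrow> 'a"
  shows "(\<Sum>k<3. f k * (\<Sum>i<3. X k i * Y i)) = (\<Sum>i<3. (\<Sum>k<3. f k * X k i) * Y i)"
  unfolding sum3 by (simp add: algebra_simps)
lemma sh_c2: fixes G Y :: "nat \<Rightarrow> 'a" and F R :: "nat \<Rightarrow> nat \<Rightarrow> 'a"
  shows "(\<Sum>i<3. (\<Sum>i'<3. \<Sum>c'<3. F i' c' * R i' i * G c') * Y i) = (\<Sum>i'<3. \<Sum>c'<3. F i' c' * G c' * (\<Sum>i<3. R i' i * Y i))"
  unfolding sum3 by (simp add: algebra_simps)
lemma sh_c3: fixes G R S :: "nat \<Rightarrow> 'a" and F :: "nat \<Rightarrow> nat \<Rightarrow> 'a" and H :: "nat \<Rightarrow> nat \<Rightarrow> nat \<Rightarrow> 'a"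
  shows "(\<Sum>i'<3. \<Sum>c'<3. F i' c' * G c' * (\<Sum>a'<3. \<Sum>b'<3. H i' a' b' * R a' * S b')) = (\<Sum>a'<3. \<Sum>b'<3. \<Sum>c'<3. (\<Sum>i'<3. F i' c' * H i' a' b') * R a' * S b' * G c')"
  unfolding sum3 by (simp add: algebra_simps)
lemma sh_c4: fixes R Y :: "nat \<Rightarrow> 'a" and F T :: "nat \<Rightarrow> nat \<Rightarrow> 'a"
  shows "(\<Sum>j<3. (\<Sum>a'<3. \<Sum>j'<3. F a' j' * R a' * T j' j) * Y j) = (\<Sum>a'<3. \<Sum>j'<3. F a' j' * R a' * (\<Sum>j<3. T j' j * Y j))"
  unfolding sum3 by (simp add: algebra_simps)
lemma sh_c5: fixes G R S :: "nat \<Rightarrow> 'a" and F :: "nat \<Rightarrow> nat \<Rightarrow> 'a" and H :: "nat \<Rightarrow> nat \<Rightarrow> nat \<Rightarrow> 'a"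
  shows "(\<Sum>a'<3. \<Sum>j'<3. F a' j' * R a' * (\<Sum>b'<3. \<Sum>c'<3. H j' b' c' * S b' * G c')) = (\<Sum>a'<3. \<Sum>b'<3. \<Sum>c'<3. (\<Sum>j'<3. F a' j' * H j' b' c') * R a' * S b' * G c')"
  unfolding sum3 by (simp add: algebra_simps)
lemma sh_e1: fixes f E :: "nat \<Rightarrow> 'a" and X :: "nat \<Rightarrow> nat \<Rightarrow> 'a"
  shows "(\<Sum>k<3. f k * (\<Sum>i<3. E i * X k i)) = (\<Sum>i<3. E i * (\<Sum>k<3. f k * X k i))"
  unfolding sum3 by (simp add: algebra_simps)
lemma sh_e2: fixes E G :: "nat \<Rightarrow> 'a" and F R :: "nat \<Rightarrow> nat \<Rightarrow> 'a"
  shows "(\<Sum>i<3. E i * (\<Sum>i'<3. \<Sum>j'<3. F i' j' * R i' i * G j')) = (\<Sum>i'<3. \<Sum>j'<3. F i' j' * (\<Sum>i<3. R i' i * E i) * G j')"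
  unfolding sum3 by (simp add: algebra_simps)
lemma sh_e3: fixes C G :: "nat \<Rightarrow> 'a" and F :: "nat \<Rightarrow> nat \<Rightarrow> 'a"
  shows "(\<Sum>i'<3. \<Sum>j'<3. F i' j' * C i' * G j') = (\<Sum>j'<3. (\<Sum>i'<3. C i' * F i' j') * G j')"
  unfolding sum3 by (simp add: algebra_simps)
lemma sh_e4: fixes C R :: "nat \<Rightarrow> 'a" and F :: "nat \<Rightarrow> nat \<Rightarrow> 'a"
  shows "(\<Sum>i'<3. \<Sum>j'<3. F i' j' * R i' * C j') = (\<Sum>i'<3. (\<Sum>j'<3. F i' j' * C j') * R i')"
  unfolding sum3 by (simp add: algebra_simps)
lemma sh_du1: fixes U X :: "nat \<Rightarrow> 'a" and R :: "nat \<Rightarrow> nat \<Rightarrow> 'a"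
  shows "(\<Sum>k<3. (\<Sum>c<3. U c * R c k) * X k) = (\<Sum>c<3. U c * (\<Sum>k<3. R c k * X k))"
  unfolding sum3 by (simp add: algebra_simps)
lemma sh_du2: fixes U R S :: "nat \<Rightarrow> 'a" and F :: "nat \<Rightarrow> nat \<Rightarrow> nat \<Rightarrow> 'a"
  shows "(\<Sum>c<3. U c * (\<Sum>i'<3. \<Sum>j'<3. F c i' j' * R i' * S j')) = (\<Sum>i'<3. \<Sum>j'<3. (\<Sum>c<3. U c * F c i' j') * R i' * S j')"
  unfolding sum3 by (simp add: algebra_simps)
lemma sh_du3: fixes U R S :: "nat \<Rightarrow> 'a"
  shows "(\<Sum>i'<3. \<Sum>j'<3. (U i' * U j') * R i' * S j') = (\<Sum>i'<3. U i' * R i') * (\<Sum>j'<3. U j' * S j')"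
  unfolding sum3 by (simp add: algebra_simps)
lemma sh_em1: fixes f g E :: "nat \<Rightarrow> 'a" and X :: "nat \<Rightarrow> nat \<Rightarrow> nat \<Rightarrow> 'a"
  shows "(\<Sum>i<3. \<Sum>j<3. f i * g j * (\<Sum>k<3. X i j k * E k)) = (\<Sum>k<3. (\<Sum>i<3. \<Sum>j<3. f i * g j * X i j k) * E k)"
  unfolding sum3 by (simp add: algebra_simps)
lemma sh_em2: fixes f g E :: "nat \<Rightarrow> 'a"
  shows "(\<Sum>i<3. \<Sum>j<3. f i * g j * (E i * E j)) = (\<Sum>i<3. f i * E i) * (\<Sum>j<3. g j * E j)"
  unfolding sum3 by (simp add: algebra_simps)
lemma sh_d3: fixes R1 R2 R3 R4 :: "nat \<Rightarrow> 'a" and U V :: "nat \<Rightarrow> nat \<Rightarrow> 'a"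
  shows "(\<Sum>i<3. \<Sum>j<3. R1 i * R2 j * (\<Sum>l<3. \<Sum>m<3. R3 l * R4 m * (c * U i l * V j m))) = c * (\<Sum>i<3. \<Sum>l<3. R1 i * R3 l * U i l) * (\<Sum>j<3. \<Sum>m<3. R2 j * R4 m * V j m)"
  unfolding sum3 by (simp add: algebra_simps)
lemma sh_d2a: fixes G :: "nat \<Rightarrow> nat \<Rightarrow> 'a" and R Z :: "nat \<Rightarrow> nat \<Rightarrow> 'a"
  shows "(\<Sum>l<3. \<Sum>m<3. (\<Sum>l'<3. \<Sum>m'<3. G l' m' * R l' l * R m' m) * Z l m) = (\<Sum>l'<3. \<Sum>m'<3. G l' m' * (\<Sum>l<3. \<Sum>m<3. R l' l * R m' m * Z l m))"
  unfolding sum3 by (simp add: algebra_simps)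
lemma sh_d2b: fixes G c :: "nat \<Rightarrow> nat \<Rightarrow> 'a" and W :: "nat \<Rightarrow> nat \<Rightarrow> nat \<Rightarrow> nat \<Rightarrow> 'a"
  shows "(\<Sum>i<3. \<Sum>j<3. c i j * (\<Sum>l'<3. \<Sum>m'<3. G l' m' * W i j l' m')) = (\<Sum>l'<3. \<Sum>m'<3. G l' m' * (\<Sum>i<3. \<Sum>j<3. c i j * W i j l' m'))"
  unfolding sum3 by (simp add: algebra_simps)
end

lemma PL1: "(\<Sum>b\<in>B. g b * (\<Sum>i\<in>I. T b i)) = (\<Sum>i\<in>I. \<Sum>b\<in>B. g b * T b i)"
  for g :: "'x \<Rightarrow> 'a::comm_semiring_0"
  by (simp add: sum_distrib_left) (rule sum.swap)
lemma PL4: "(\<Sum>b\<in>B. g b * (\<Sum>i\<in>I. \<Sum>j\<in>J. \<Sum>l\<in>L. \<Sum>m\<in>M. T b i j l m)) = (\<Sum>i\<in>I. \<Sum>j\<in>J. \<Sum>l\<in>L. \<Sum>m\<in>M. \<Sum>b\<in>B. g b * T b i j l m)"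
  for g :: "'x \<Rightarrow> 'a::comm_semiring_0"
  by (simp only: PL1)
lemma IN4: "(\<Sum>b\<in>B. \<Sum>i\<in>I. \<Sum>j\<in>J. \<Sum>l\<in>L. \<Sum>m\<in>M. T b i j l m) = (\<Sum>i\<in>I. \<Sum>j\<in>J. \<Sum>l\<in>L. \<Sum>m\<in>M. \<Sum>b\<in>B. T b i j l m)"
  for T :: "_ \<Rightarrow> _ \<Rightarrow> _ \<Rightarrow> _ \<Rightarrow> _ \<Rightarrow> 'a::comm_semiring_1"
proof -
  have "(\<Sum>b\<in>B. (1::'a) * (\<Sum>i\<in>I. \<Sum>j\<in>J. \<Sum>l\<in>L. \<Sum>m\<in>M. T b i j l m)) = (\<Sum>i\<in>I. \<Sum>j\<in>J. \<Sum>l\<in>L. \<Sum>m\<in>M. \<Sum>b\<in>B. 1 * T b i j l m)"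
    by (rule PL4)
  then show ?thesis by (simp only: mult_1_left)
qed

context fixes dummy :: "'a::comm_ring_1" begin
lemma D1: fixes f g :: "nat \<Rightarrow> 'a" and X Y :: "nat \<Rightarrow> nat \<Rightarrow> nat \<Rightarrow> 'a" and K U V :: "nat \<Rightarrow> nat \<Rightarrow> 'a"
  shows "(\<Sum>a<3. \<Sum>b<3. f a * g b * (\<Sum>i<3. \<Sum>j<3. \<Sum>l<3. \<Sum>m<3. X a i j * Y b l m * K j l * U i l * V j m)) = (\<Sum>i<3. \<Sum>j<3. \<Sum>l<3. \<Sum>m<3. (\<Sum>a<3. f a * X a i j) * (\<Sum>b<3. g b * Y b l m) * K j l * U i l * V j m)"
proof -
  have "(\<Sum>a<3. \<Sum>b<3. f a * g b * (\<Sum>i<3. \<Sum>j<3. \<Sum>l<3. \<Sum>m<3. X a i j * Y b l m * K j l * U i l * V j m)) =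
    (\<Sum>a<3. f a * (\<Sum>b<3. g b * (\<Sum>i<3. \<Sum>j<3. \<Sum>l<3. \<Sum>m<3. X a i j * Y b l m * K j l * U i l * V j m)))"
    by (simp add: sum_distrib_left mult.assoc)
  also have "\<dots> = (\<Sum>i<3. \<Sum>j<3. \<Sum>l<3. \<Sum>m<3. \<Sum>a<3. f a * (\<Sum>b<3. g b * (X a i j * Y b l m * K j l * U i l * V j m)))"
    by (simp only: PL4)
  also have "\<dots> = (\<Sum>i<3. \<Sum>j<3. \<Sum>l<3. \<Sum>m<3. (\<Sum>a<3. f a * X a i j) * (\<Sum>b<3. g b * Y b l m) * K j l * U i l * V j m)"
    by (intro sum.cong refl) (simp add: sum3 algebra_simps)
  finally show ?thesis .
qed

lemma grp4: fixes X Y K U V :: "nat \<Rightarrow> nat \<Rightarrow> 'a"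
  shows "(\<Sum>i<3. \<Sum>j<3. \<Sum>l<3. \<Sum>m<3. X i j * Y l m * K j l * U i l * V j m) = (\<Sum>i<3. \<Sum>j<3. X i j * (\<Sum>l<3. \<Sum>m<3. Y l m * (K j l * U i l * V j m)))"
  by (simp add: sum_distrib_left mult.assoc)

lemma grp2: fixes F G :: "nat \<Rightarrow> nat \<Rightarrow> 'a" and I :: "nat \<Rightarrow> nat \<Rightarrow> nat \<Rightarrow> nat \<Rightarrow> 'a"
  shows "(\<Sum>i'<3. \<Sum>j'<3. F i' j' * (\<Sum>l'<3. \<Sum>m'<3. G l' m' * I i' j' l' m')) = (\<Sum>i'<3. \<Sum>j'<3. \<Sum>l'<3. \<Sum>m'<3. F i' j' * G l' m' * I i' j' l' m')"
  by (simp add: sum_distrib_left mult.assoc)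

lemma D2: fixes F G R :: "nat \<Rightarrow> nat \<Rightarrow> 'a" and K U V :: "nat \<Rightarrow> nat \<Rightarrow> 'a"
  shows "(\<Sum>i<3. \<Sum>j<3. \<Sum>l<3. \<Sum>m<3. (\<Sum>i'<3. \<Sum>j'<3. F i' j' * R i' i * R j' j) * (\<Sum>l'<3. \<Sum>m'<3. G l' m' * R l' l * R m' m) * K j l * U i l * V j m)
   = (\<Sum>i'<3. \<Sum>j'<3. \<Sum>l'<3. \<Sum>m'<3. F i' j' * G l' m' * (\<Sum>i<3. \<Sum>j<3. R i' i * R j' j * (\<Sum>l<3. \<Sum>m<3. R l' l * R m' m * (K j l * U i l * V j m))))"
proof -
  define X where "X = (\<lambda>i j. \<Sum>i'<3. \<Sum>j'<3. F i' j' * R i' i * R j' j)"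
  define W where "W = (\<lambda>i j l' m'. \<Sum>l<3. \<Sum>m<3. R l' l * R m' m * (K j l * U i l * V j m))"
  define Y where "Y = (\<lambda>l m. \<Sum>l'<3. \<Sum>m'<3. G l' m' * R l' l * R m' m)"
  have in1: "(\<Sum>l<3. \<Sum>m<3. Y l m * (K j l * U i l * V j m)) = (\<Sum>l'<3. \<Sum>m'<3. G l' m' * W i j l' m')" for i j
    unfolding Y_def W_def by (rule sh_d2a)
  have in2: "(\<Sum>i<3. \<Sum>j<3. R i' i * R j' j * (\<Sum>l'<3. \<Sum>m'<3. G l' m' * W i j l' m')) = (\<Sum>l'<3. \<Sum>m'<3. G l' m' * (\<Sum>i<3. \<Sum>j<3. R i' i * R j' j * W i j l' m'))" for i' j'
    by (rule sh_d2b)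
  have "(\<Sum>i<3. \<Sum>j<3. \<Sum>l<3. \<Sum>m<3. X i j * Y l m * K j l * U i l * V j m)
     = (\<Sum>i<3. \<Sum>j<3. X i j * (\<Sum>l<3. \<Sum>m<3. Y l m * (K j l * U i l * V j m)))"
    by (rule grp4)
  also have "\<dots> = (\<Sum>i<3. \<Sum>j<3. X i j * (\<Sum>l'<3. \<Sum>m'<3. G l' m' * W i j l' m'))"
    by (simp only: in1)
  also have "\<dots> = (\<Sum>i'<3. \<Sum>j'<3. F i' j' * (\<Sum>i<3. \<Sum>j<3. R i' i * R j' j * (\<Sum>l'<3. \<Sum>m'<3. G l' m' * W i j l' m')))"
    unfolding X_def by (rule sh_d2a)
  also have "\<dots> = (\<Sum>i'<3. \<Sum>j'<3. F i' j' * (\<Sum>l'<3. \<Sum>m'<3. G l' m' * (\<Sum>i<3. \<Sum>j<3. R i' i * R j' j * W i j l' m')))"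
    by (simp only: in2)
  also have "\<dots> = (\<Sum>i'<3. \<Sum>j'<3. \<Sum>l'<3. \<Sum>m'<3. F i' j' * G l' m' * (\<Sum>i<3. \<Sum>j<3. R i' i * R j' j * W i j l' m'))"
    by (rule grp2)
  finally show ?thesis unfolding X_def Y_def W_def .
qed

lemma D4: fixes F G c :: "nat \<Rightarrow> nat \<Rightarrow> 'a" and U V :: "nat \<Rightarrow> nat \<Rightarrow> nat \<Rightarrow> 'a" and R S :: "nat \<Rightarrow> 'a"
  shows "(\<Sum>i'<3. \<Sum>j'<3. \<Sum>l'<3. \<Sum>m'<3. F i' j' * G l' m' * (c j' l' * (\<Sum>k<3. U i' l' k * R k) * (\<Sum>k<3. V j' m' k * S k)))
    = (\<Sum>i<3. \<Sum>j<3. (\<Sum>i'<3. \<Sum>j'<3. \<Sum>l'<3. \<Sum>m'<3. F i' j' * G l' m' * c j' l' * U i' l' i * V j' m' j) * R i * S j)"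
proof -
  have "(\<Sum>i'<3. \<Sum>j'<3. \<Sum>l'<3. \<Sum>m'<3. F i' j' * G l' m' * (c j' l' * (\<Sum>k<3. U i' l' k * R k) * (\<Sum>k<3. V j' m' k * S k)))
     = (\<Sum>i'<3. \<Sum>j'<3. \<Sum>l'<3. \<Sum>m'<3. \<Sum>i<3. \<Sum>j<3. F i' j' * G l' m' * c j' l' * U i' l' i * V j' m' j * R i * S j)"
    by (intro sum.cong refl) (simp add: sum3 algebra_simps)
  also have "\<dots> = (\<Sum>i<3. \<Sum>i'<3. \<Sum>j'<3. \<Sum>l'<3. \<Sum>m'<3. \<Sum>j<3. F i' j' * G l' m' * c j' l' * U i' l' i * V j' m' j * R i * S j)"
    by (rule IN4[symmetric])
  also have "\<dots> = (\<Sum>i<3. \<Sum>j<3. \<Sum>i'<3. \<Sum>j'<3. \<Sum>l'<3. \<Sum>m'<3. F i' j' * G l' m' * c j' l' * U i' l' i * V j' m' j * R i * S j)"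
    by (rule sum.cong[OF refl]) (rule IN4[symmetric])
  also have "\<dots> = (\<Sum>i<3. \<Sum>j<3. (\<Sum>i'<3. \<Sum>j'<3. \<Sum>l'<3. \<Sum>m'<3. F i' j' * G l' m' * c j' l' * U i' l' i * V j' m' j) * R i * S j)"
    by (simp add: sum_distrib_right)
  finally show ?thesis .
qed
end

section \<open>Cancellation\<close>

lemma cancel1:
  assumes inv: "inv3 P Q" and h: "\<forall>a<3. (\<Sum>k<3. P a k * X k) = (\<Sum>k<3. P a k * Y k)" and k: "k<3"
  shows "X k = (Y k :: 'a::comm_ring_1)"
proof -
  have QP: "\<And>i k. i<3 \<Longrightarrow> k<3 \<Longrightarrow> (\<Sum>j<3. Q i j * P j k) = kd i k" using inv unfolding inv3_def by blast
  have key: "(\<Sum>a<3. Q k a * (\<Sum>j<3. P a j * Z j)) = Z k" for Z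
  proof -
    have "(\<Sum>a<3. Q k a * (\<Sum>j<3. P a j * Z j)) = (\<Sum>j<3. (\<Sum>a<3. Q k a * P a j) * Z j)"
      by (rule sh_lin)
    also have "\<dots> = (\<Sum>j<3. kd k j * Z j)" using QP k by (intro sum.cong) auto
    also have "\<dots> = Z k" using k by (rule kd_sum_l)
    finally show ?thesis .
  qed
  have "X k = (\<Sum>a<3. Q k a * (\<Sum>j<3. P a j * X j))" by (rule key[symmetric])
  also have "\<dots> = (\<Sum>a<3. Q k a * (\<Sum>j<3. P a j * Y j))" using h by (intro sum.cong) auto
  also have "\<dots> = Y k" by (rule key)
  finally show ?thesis .
qed

lemma cancel2:
  assumes inv: "inv3 P Q"
    and h: "\<forall>a<3. \<forall>b<3. (\<Sum>i<3. \<Sum>j<3. P a i * P b j * X i j) = (\<Sum>i<3. \<Sum>j<3. P a i * P b j * Y i j)"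
    and ij: "i<3" "j<3"
  shows "X i j = (Y i j :: 'a::comm_ring_1)"
proof -
  have e: "\<And>a b Z. (\<Sum>i<3. \<Sum>j<3. P a i * P b j * Z i j) = (\<Sum>i<3. P a i * (\<Sum>j<3. P b j * Z i j))"
    by (simp add: sum_distrib_left mult.assoc)
  have 1: "(\<Sum>j<3. P b j * X i j) = (\<Sum>j<3. P b j * Y i j)" if b: "b<3" for b
  proof -
    have "\<forall>a<3. (\<Sum>k<3. P a k * (\<Sum>j<3. P b j * X k j)) = (\<Sum>k<3. P a k * (\<Sum>j<3. P b j * Y k j))"
      using h b by (simp add: e)
    then show ?thesis using cancel1[OF inv, of "\<lambda>k. \<Sum>j<3. P b j * X k j" "\<lambda>k. \<Sum>j<3. P b j * Y k j" i] ij
      by simp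
  qed
  show ?thesis using cancel1[OF inv, of "\<lambda>j. X i j" "\<lambda>j. Y i j" j] 1 ij by simp
qed

lemma cancel3:
  assumes inv: "inv3 P Q"
    and h: "\<forall>a<3. \<forall>b<3. \<forall>d<3. (\<Sum>i<3. \<Sum>j<3. \<Sum>l<3. P a i * P b j * P d l * X i j l) =
               (\<Sum>i<3. \<Sum>j<3. \<Sum>l<3. P a i * P b j * P d l * Y i j l)"
    and ijl: "i<3" "j<3" "l<3"
  shows "X i j l = (Y i j l :: 'a::comm_ring_1)"
proof -
  have e: "\<And>a b d Z. (\<Sum>i<3. \<Sum>j<3. \<Sum>l<3. P a i * P b j * P d l * Z i j l) = (\<Sum>i<3. \<Sum>j<3. P a i * P b j * (\<Sum>l<3. P d l * Z i j l))"
    by (simp add: sum_distrib_left mult.assoc)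
  have 1: "(\<Sum>l<3. P d l * X i j l) = (\<Sum>l<3. P d l * Y i j l)" if d: "d<3" for d
  proof -
    have "\<forall>a<3. \<forall>b<3. (\<Sum>i<3. \<Sum>j<3. P a i * P b j * (\<Sum>l<3. P d l * X i j l)) = (\<Sum>i<3. \<Sum>j<3. P a i * P b j * (\<Sum>l<3. P d l * Y i j l))"
      using h d by (simp add: e)
    then show ?thesis using cancel2[OF inv, of "\<lambda>i j. \<Sum>l<3. P d l * X i j l" "\<lambda>i j. \<Sum>l<3. P d l * Y i j l" i j] ijl
      by simp
  qed
  show ?thesis using cancel1[OF inv, of "\<lambda>l. X i j l" "\<lambda>l. Y i j l" l] 1 ijl by simp
qed

declare One_nat_def [simp del]

lemma sbD_raw:
  assumes S: "superbialg3 A"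
  shows "((\<forall>i<3. \<forall>j<3. \<forall>k<3. mu A i j k \<noteq> 0 \<longrightarrow> par k = (par i + par j) mod 2)) \<and>
    (un A 2 = 0) \<and>
    ((\<forall>k<3. \<forall>i<3. \<forall>j<3. co A k i j \<noteq> 0 \<longrightarrow> (par i + par j) mod 2 = par k)) \<and>
    (cu A 2 = 0) \<and>
    ((\<forall>i<3. \<forall>j<3. \<forall>l<3. \<forall>n<3.
       (\<Sum>k<3. mu A i j k * mu A k l n) = (\<Sum>k<3. mu A j l k * mu A i k n))) \<and>
    ((\<forall>i<3. \<forall>k<3. (\<Sum>j<3. un A j * mu A j i k) = kd i k \<and>
                   (\<Sum>j<3. un A j * mu A i j k) = kd i k)) \<and>
    ((\<forall>k<3. \<forall>a<3. \<forall>b<3. \<forall>c<3.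
       (\<Sum>i<3. co A k i c * co A i a b) = (\<Sum>j<3. co A k a j * co A j b c))) \<and>
    ((\<forall>k<3. \<forall>j<3. (\<Sum>i<3. cu A i * co A k i j) = kd k j)) \<and>
    ((\<forall>k<3. \<forall>i<3. (\<Sum>j<3. co A k i j * cu A j) = kd k i)) \<and>
    ((\<forall>i<3. \<forall>j<3. (\<Sum>k<3. un A k * co A k i j) = un A i * un A j)) \<and>
    ((\<Sum>k<3. un A k * cu A k) = 1) \<and>
    ((\<forall>i<3. \<forall>j<3. (\<Sum>k<3. mu A i j k * cu A k) = cu A i * cu A j)) \<and>
    ((\<forall>a<3. \<forall>b<3. \<forall>p<3. \<forall>q<3.
       (\<Sum>k<3. mu A a b k * co A k p q) =
       (\<Sum>i<3. \<Sum>j<3. \<Sum>l<3. \<Sum>m<3.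
          co A a i j * co A b l m * ksign j l * mu A i l p * mu A j m q)))"
  using S unfolding superbialg3_def .

lemmas sb_gmu = sbD_raw[THEN conjunct1, rule_format]
lemmas sb_un2 = sbD_raw[THEN conjunct2, THEN conjunct1]
lemmas sb_gco = sbD_raw[THEN conjunct2, THEN conjunct2, THEN conjunct1, rule_format]
lemmas sb_cu2 = sbD_raw[THEN conjunct2, THEN conjunct2, THEN conjunct2, THEN conjunct1]
lemmas sb_assoc = sbD_raw[THEN conjunct2, THEN conjunct2, THEN conjunct2, THEN conjunct2, THEN conjunct1, rule_format]
lemmas sb_unlr = sbD_raw[THEN conjunct2, THEN conjunct2, THEN conjunct2, THEN conjunct2, THEN conjunct2, THEN conjunct1, rule_format]
lemmas sb_coass = sbD_raw[THEN conjunct2, THEN conjunct2, THEN conjunct2, THEN conjunct2, THEN conjunct2, THEN conjunct2, THEN conjunct1, rule_format]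
lemmas sb_cul = sbD_raw[THEN conjunct2, THEN conjunct2, THEN conjunct2, THEN conjunct2, THEN conjunct2, THEN conjunct2, THEN conjunct2, THEN conjunct1, rule_format]
lemmas sb_cur = sbD_raw[THEN conjunct2, THEN conjunct2, THEN conjunct2, THEN conjunct2, THEN conjunct2, THEN conjunct2, THEN conjunct2, THEN conjunct2, THEN conjunct1, rule_format]
lemmas sb_dun = sbD_raw[THEN conjunct2, THEN conjunct2, THEN conjunct2, THEN conjunct2, THEN conjunct2, THEN conjunct2, THEN conjunct2, THEN conjunct2, THEN conjunct2, THEN conjunct1, rule_format]
lemmas sb_eun = sbD_raw[THEN conjunct2, THEN conjunct2, THEN conjunct2, THEN conjunct2, THEN conjunct2, THEN conjunct2, THEN conjunct2, THEN conjunct2, THEN conjunct2, THEN conjunct2, THEN conjunct1]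
lemmas sb_emul = sbD_raw[THEN conjunct2, THEN conjunct2, THEN conjunct2, THEN conjunct2, THEN conjunct2, THEN conjunct2, THEN conjunct2, THEN conjunct2, THEN conjunct2, THEN conjunct2, THEN conjunct2, THEN conjunct1, rule_format]
lemmas sb_dmul = sbD_raw[THEN conjunct2, THEN conjunct2, THEN conjunct2, THEN conjunct2, THEN conjunct2, THEN conjunct2, THEN conjunct2, THEN conjunct2, THEN conjunct2, THEN conjunct2, THEN conjunct2, THEN conjunct2, rule_format]
lemmas sb_unl = sb_unlr[THEN conjunct1]
lemmas sb_unr = sb_unlr[THEN conjunct2]

lemma sbI:
  assumes "(\<forall>i<3. \<forall>j<3. \<forall>k<3. mu A i j k \<noteq> 0 \<longrightarrow> par k = (par i + par j) mod 2)"
    "un A 2 = 0"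
    "(\<forall>k<3. \<forall>i<3. \<forall>j<3. co A k i j \<noteq> 0 \<longrightarrow> (par i + par j) mod 2 = par k)"
    "cu A 2 = 0"
    "(\<forall>i<3. \<forall>j<3. \<forall>l<3. \<forall>n<3.
       (\<Sum>k<3. mu A i j k * mu A k l n) = (\<Sum>k<3. mu A j l k * mu A i k n))"
    "(\<forall>i<3. \<forall>k<3. (\<Sum>j<3. un A j * mu A j i k) = kd i k \<and>
                   (\<Sum>j<3. un A j * mu A i j k) = kd i k)"
    "(\<forall>k<3. \<forall>a<3. \<forall>b<3. \<forall>c<3.
       (\<Sum>i<3. co A k i c * co A i a b) = (\<Sum>j<3. co A k a j * co A j b c))"
    "(\<forall>k<3. \<forall>j<3. (\<Sum>i<3. cu A i * co A k i j) = kd k j)"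
    "(\<forall>k<3. \<forall>i<3. (\<Sum>j<3. co A k i j * cu A j) = kd k i)"
    "(\<forall>i<3. \<forall>j<3. (\<Sum>k<3. un A k * co A k i j) = un A i * un A j)"
    "(\<Sum>k<3. un A k * cu A k) = 1"
    "(\<forall>i<3. \<forall>j<3. (\<Sum>k<3. mu A i j k * cu A k) = cu A i * cu A j)"
    "(\<forall>a<3. \<forall>b<3. \<forall>p<3. \<forall>q<3.
       (\<Sum>k<3. mu A a b k * co A k p q) =
       (\<Sum>i<3. \<Sum>j<3. \<Sum>l<3. \<Sum>m<3.
          co A a i j * co A b l m * ksign j l * mu A i l p * mu A j m q))"
  shows "superbialg3 A"
  unfolding superbialg3_def by (intro conjI) (fact assms)+

locale isoctx =
  fixes A B :: "'a::field sbd" and P Q :: "nat \<Rightarrow> nat \<Rightarrow> 'a"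
  assumes ev: "evenM P" and inv: "inv3 P Q" and iso: "isoM A B P"
begin

lemma Mr: "a<3 \<Longrightarrow> b<3 \<Longrightarrow> c<3 \<Longrightarrow> (\<Sum>i<3. \<Sum>j<3. P a i * P b j * mu B i j c) = (\<Sum>k<3. mu A a b k * P k c)"
  using iso unfolding isoM_def by simp
lemma Ur: "c<3 \<Longrightarrow> (\<Sum>k<3. un A k * P k c) = un B c"
  using iso unfolding isoM_def by simp
lemma Cr: "a<3 \<Longrightarrow> p<3 \<Longrightarrow> q<3 \<Longrightarrow> (\<Sum>k<3. P a k * co B k p q) = (\<Sum>i<3. \<Sum>j<3. co A a i j * P i p * P j q)"
  using iso unfolding isoM_def by simp
lemma Er: "a<3 \<Longrightarrow> (\<Sum>k<3. P a k * cu B k) = cu A a"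
  using iso unfolding isoM_def by simp
lemma PQ: "i<3 \<Longrightarrow> k<3 \<Longrightarrow> (\<Sum>j<3. P i j * Q j k) = kd i k"
  using inv unfolding inv3_def by simp
lemma QP: "i<3 \<Longrightarrow> k<3 \<Longrightarrow> (\<Sum>j<3. Q i j * P j k) = kd i k"
  using inv unfolding inv3_def by simp
lemma Pz: "P 0 2 = 0" "P 1 2 = 0" "P 2 0 = 0" "P 2 1 = 0"
  using evenM_z[OF ev] by auto
lemma Qz: "Q 0 2 = 0" "Q 1 2 = 0" "Q 2 0 = 0" "Q 2 1 = 0"
proof -
  have p22: "Q 2 2 * P 2 2 = 1" using QP[of 2 2] by (simp add: sum3 Pz kd_def)
  then have "P 2 2 \<noteq> 0" by auto
  moreover have "P 2 2 * Q 2 0 = 0" using PQ[of 2 0] by (simp add: sum3 Pz kd_def)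
  moreover have "P 2 2 * Q 2 1 = 0" using PQ[of 2 1] by (simp add: sum3 Pz kd_def)
  moreover have "Q 0 2 * P 2 2 = 0" using QP[of 0 2] by (simp add: sum3 Pz kd_def)
  moreover have "Q 1 2 * P 2 2 = 0" using QP[of 1 2] by (simp add: sum3 Pz kd_def)
  ultimately show "Q 0 2 = 0" "Q 1 2 = 0" "Q 2 0 = 0" "Q 2 1 = 0" by auto
qed
lemma evQ: "evenM Q"
  unfolding evenM_def all3 by (simp add: Qz)

lemma FBmu: assumes h: "i<3" "j<3" "c<3"
  shows "mu B i j c = (\<Sum>a<3. \<Sum>b<3. Q i a * Q j b * (\<Sum>k<3. mu A a b k * P k c))"
proof -
  have "(\<Sum>a<3. \<Sum>b<3. Q i a * Q j b * (\<Sum>k<3. mu A a b k * P k c)) = (\<Sum>a<3. \<Sum>b<3. Q i a * Q j b * (\<Sum>i'<3. \<Sum>j'<3. P a i' * P b j' * mu B i' j' c))"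
    using h by (intro sum.cong refl) (simp add: Mr)
  also have "\<dots> = (\<Sum>i'<3. \<Sum>j'<3. (\<Sum>a<3. Q i a * P a i') * (\<Sum>b<3. Q j b * P b j') * mu B i' j' c)"
    by (rule sh_fb)
  also have "\<dots> = (\<Sum>i'<3. \<Sum>j'<3. kd i i' * kd j j' * mu B i' j' c)"
    using h by (intro sum.cong refl) (simp add: QP)
  also have "\<dots> = mu B i j c" using h less3[of i] less3[of j] by (auto simp: sum3 kd_def)
  finally show ?thesis by simp
qed

lemma FBco: assumes h: "k<3" "p<3" "q<3"
  shows "co B k p q = (\<Sum>a<3. Q k a * (\<Sum>i<3. \<Sum>j<3. co A a i j * P i p * P j q))"
proof -
  have "(\<Sum>a<3. Q k a * (\<Sum>i<3. \<Sum>j<3. co A a i j * P i p * P j q)) = (\<Sum>a<3. Q k a * (\<Sum>k'<3. P a k' * co B k' p q))"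
    using h by (intro sum.cong refl) (simp add: Cr)
  also have "\<dots> = (\<Sum>k'<3. (\<Sum>a<3. Q k a * P a k') * co B k' p q)"
    by (rule sh_lin)
  also have "\<dots> = (\<Sum>k'<3. kd k k' * co B k' p q)"
    using h by (intro sum.cong refl) (simp add: QP)
  also have "\<dots> = co B k p q" using h(1) by (rule kd_sum_l)
  finally show ?thesis by simp
qed

lemma FBcu: assumes h: "k<3"
  shows "cu B k = (\<Sum>a<3. Q k a * cu A a)"
proof -
  have "(\<Sum>a<3. Q k a * cu A a) = (\<Sum>a<3. Q k a * (\<Sum>k'<3. P a k' * cu B k'))"
    by (intro sum.cong refl) (simp add: Er)
  also have "\<dots> = (\<Sum>k'<3. (\<Sum>a<3. Q k a * P a k') * cu B k')"
    by (rule sh_lin)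
  also have "\<dots> = (\<Sum>k'<3. kd k k' * cu B k')"
    using h by (intro sum.cong refl) (simp add: QP)
  also have "\<dots> = cu B k" using h by (rule kd_sum_l)
  finally show ?thesis by simp
qed


context
  assumes SA: "superbialg3 A"
begin

lemma A_muz: "i<3 \<Longrightarrow> j<3 \<Longrightarrow> k<3 \<Longrightarrow> par k \<noteq> (par i + par j) mod 2 \<Longrightarrow> mu A i j k = 0"
  using sb_gmu[OF SA] by blast
lemma A_coz: "k<3 \<Longrightarrow> i<3 \<Longrightarrow> j<3 \<Longrightarrow> (par i + par j) mod 2 \<noteq> par k \<Longrightarrow> co A k i j = 0"
  using sb_gco[OF SA] by blast

lemma B_gmu: "\<forall>i<3. \<forall>j<3. \<forall>k<3. mu B i j k \<noteq> 0 \<longrightarrow> par k = (par i + par j) mod 2"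
  unfolding all3 by (simp add: FBmu sum3 Pz Qz A_muz)

lemma B_un2: "un B 2 = 0"
  using Ur[of 2] by (simp add: sum3 Pz sb_un2[OF SA])

lemma B_gco: "\<forall>k<3. \<forall>i<3. \<forall>j<3. co B k i j \<noteq> 0 \<longrightarrow> (par i + par j) mod 2 = par k"
  unfolding all3 by (simp add: FBco sum3 Pz Qz A_coz)

lemma B_cu2: "cu B 2 = 0"
  by (simp add: FBcu sum3 Qz sb_cu2[OF SA])

lemma B_assoc: "\<forall>i<3. \<forall>j<3. \<forall>l<3. \<forall>n<3. (\<Sum>k<3. mu B i j k * mu B k l n) = (\<Sum>k<3. mu B j l k * mu B i k n)"
proof (intro allI impI)
  fix i j l n :: nat assume h: "i<3" "j<3" "l<3" "n<3"
  have L: "(\<Sum>i<3. \<Sum>j<3. \<Sum>l<3. P a i * P b j * P d l * (\<Sum>k<3. mu B i j k * mu B k l n)) = (\<Sum>m<3. (\<Sum>k'<3. mu A a b k' * mu A k' d m) * P m n)"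
    if abd: "a<3" "b<3" "d<3" for a b d
  proof -
    have "(\<Sum>i<3. \<Sum>j<3. \<Sum>l<3. P a i * P b j * P d l * (\<Sum>k<3. mu B i j k * mu B k l n)) = (\<Sum>k<3. \<Sum>l<3. (\<Sum>i<3. \<Sum>j<3. P a i * P b j * mu B i j k) * P d l * mu B k l n)"
      by (rule sh_as1)
    also have "\<dots> = (\<Sum>k<3. \<Sum>l<3. (\<Sum>k'<3. mu A a b k' * P k' k) * P d l * mu B k l n)"
      using abd by (simp add: Mr)
    also have "\<dots> = (\<Sum>k'<3. mu A a b k' * (\<Sum>k<3. \<Sum>l<3. P k' k * P d l * mu B k l n))"
      by (rule sh_as2)
    also have "\<dots> = (\<Sum>k'<3. mu A a b k' * (\<Sum>m<3. mu A k' d m * P m n))"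
      using abd h by (simp add: Mr)
    also have "\<dots> = (\<Sum>m<3. (\<Sum>k'<3. mu A a b k' * mu A k' d m) * P m n)"
      by (rule sh_as3)
    finally show ?thesis .
  qed
  have R: "(\<Sum>i<3. \<Sum>j<3. \<Sum>l<3. P a i * P b j * P d l * (\<Sum>k<3. mu B j l k * mu B i k n)) = (\<Sum>m<3. (\<Sum>k'<3. mu A b d k' * mu A a k' m) * P m n)"
    if abd: "a<3" "b<3" "d<3" for a b d
  proof -
    have "(\<Sum>i<3. \<Sum>j<3. \<Sum>l<3. P a i * P b j * P d l * (\<Sum>k<3. mu B j l k * mu B i k n)) = (\<Sum>i<3. \<Sum>k<3. P a i * (\<Sum>j<3. \<Sum>l<3. P b j * P d l * mu B j l k) * mu B i k n)"
      by (rule sh_as4)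
    also have "\<dots> = (\<Sum>i<3. \<Sum>k<3. P a i * (\<Sum>k'<3. mu A b d k' * P k' k) * mu B i k n)"
      using abd by (simp add: Mr)
    also have "\<dots> = (\<Sum>k'<3. mu A b d k' * (\<Sum>i<3. \<Sum>k<3. P a i * P k' k * mu B i k n))"
      by (rule sh_as5)
    also have "\<dots> = (\<Sum>k'<3. mu A b d k' * (\<Sum>m<3. mu A a k' m * P m n))"
      using abd h by (simp add: Mr)
    also have "\<dots> = (\<Sum>m<3. (\<Sum>k'<3. mu A b d k' * mu A a k' m) * P m n)"
      by (rule sh_as3)
    finally show ?thesis .
  qed
  have "\<forall>a<3. \<forall>b<3. \<forall>d<3. (\<Sum>i<3. \<Sum>j<3. \<Sum>l<3. P a i * P b j * P d l * (\<Sum>k<3. mu B i j k * mu B k l n)) =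
     (\<Sum>i<3. \<Sum>j<3. \<Sum>l<3. P a i * P b j * P d l * (\<Sum>k<3. mu B j l k * mu B i k n))"
  proof (intro allI impI)
    fix a b d :: nat assume abd: "a<3" "b<3" "d<3"
    have "(\<Sum>m<3. (\<Sum>k'<3. mu A a b k' * mu A k' d m) * P m n) = (\<Sum>m<3. (\<Sum>k'<3. mu A b d k' * mu A a k' m) * P m n)"
      using abd by (simp add: sb_assoc[OF SA])
    then show "(\<Sum>i<3. \<Sum>j<3. \<Sum>l<3. P a i * P b j * P d l * (\<Sum>k<3. mu B i j k * mu B k l n)) =
     (\<Sum>i<3. \<Sum>j<3. \<Sum>l<3. P a i * P b j * P d l * (\<Sum>k<3. mu B j l k * mu B i k n))"
      using L[OF abd] R[OF abd] by simp
  qed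
  then show "(\<Sum>k<3. mu B i j k * mu B k l n) = (\<Sum>k<3. mu B j l k * mu B i k n)"
    using cancel3[OF inv, of "\<lambda>i j l. \<Sum>k<3. mu B i j k * mu B k l n" "\<lambda>i j l. \<Sum>k<3. mu B j l k * mu B i k n" i j l] h
    by simp
qed

lemma B_unit: "\<forall>i<3. \<forall>k<3. (\<Sum>j<3. un B j * mu B j i k) = kd i k \<and> (\<Sum>j<3. un B j * mu B i j k) = kd i k"
proof (intro allI impI conjI)
  fix i k :: nat assume h: "i<3" "k<3"
  have "\<forall>a<3. (\<Sum>i<3. P a i * (\<Sum>j<3. un B j * mu B j i k)) = (\<Sum>i<3. P a i * kd i k)"
  proof (intro allI impI)
    fix a :: nat assume a: "a<3"
    have "(\<Sum>i<3. P a i * (\<Sum>j<3. un B j * mu B j i k)) = (\<Sum>i<3. P a i * (\<Sum>j<3. (\<Sum>c<3. un A c * P c j) * mu B j i k))"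
      by (simp add: Ur)
    also have "\<dots> = (\<Sum>c<3. un A c * (\<Sum>j<3. \<Sum>i<3. P c j * P a i * mu B j i k))" by (rule sh_u1)
    also have "\<dots> = (\<Sum>c<3. un A c * (\<Sum>m<3. mu A c a m * P m k))" using a h by (simp add: Mr)
    also have "\<dots> = (\<Sum>m<3. (\<Sum>c<3. un A c * mu A c a m) * P m k)" by (rule sh_as3)
    also have "\<dots> = (\<Sum>m<3. kd a m * P m k)" using a by (simp add: sb_unl[OF SA])
    also have "\<dots> = P a k" using a by (rule kd_sum_l)
    also have "\<dots> = (\<Sum>i<3. P a i * kd i k)" using h by (simp add: kd_sum_r)
    finally show "(\<Sum>i<3. P a i * (\<Sum>j<3. un B j * mu B j i k)) = (\<Sum>i<3. P a i * kd i k)" .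
  qed
  then show "(\<Sum>j<3. un B j * mu B j i k) = kd i k"
    using cancel1[OF inv, of "\<lambda>i. \<Sum>j<3. un B j * mu B j i k" "\<lambda>i. kd i k" i] h by simp
  have "\<forall>a<3. (\<Sum>i<3. P a i * (\<Sum>j<3. un B j * mu B i j k)) = (\<Sum>i<3. P a i * kd i k)"
  proof (intro allI impI)
    fix a :: nat assume a: "a<3"
    have "(\<Sum>i<3. P a i * (\<Sum>j<3. un B j * mu B i j k)) = (\<Sum>i<3. P a i * (\<Sum>j<3. (\<Sum>c<3. un A c * P c j) * mu B i j k))"
      by (simp add: Ur)
    also have "\<dots> = (\<Sum>c<3. un A c * (\<Sum>i<3. \<Sum>j<3. P a i * P c j * mu B i j k))" by (rule sh_u2)
    also have "\<dots> = (\<Sum>c<3. un A c * (\<Sum>m<3. mu A a c m * P m k))" using a h by (simp add: Mr)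
    also have "\<dots> = (\<Sum>m<3. (\<Sum>c<3. un A c * mu A a c m) * P m k)" by (rule sh_as3)
    also have "\<dots> = (\<Sum>m<3. kd a m * P m k)" using a by (simp add: sb_unr[OF SA])
    also have "\<dots> = P a k" using a by (rule kd_sum_l)
    also have "\<dots> = (\<Sum>i<3. P a i * kd i k)" using h by (simp add: kd_sum_r)
    finally show "(\<Sum>i<3. P a i * (\<Sum>j<3. un B j * mu B i j k)) = (\<Sum>i<3. P a i * kd i k)" .
  qed
  then show "(\<Sum>j<3. un B j * mu B i j k) = kd i k"
    using cancel1[OF inv, of "\<lambda>i. \<Sum>j<3. un B j * mu B i j k" "\<lambda>i. kd i k" i] h by simp
qed

lemma B_coass: "\<forall>k<3. \<forall>a<3. \<forall>b<3. \<forall>c<3. (\<Sum>i<3. co B k i c * co B i a b) = (\<Sum>j<3. co B k a j * co B j b c)"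
proof (intro allI impI)
  fix k a b c :: nat assume h: "k<3" "a<3" "b<3" "c<3"
  have "\<forall>k0<3. (\<Sum>k<3. P k0 k * (\<Sum>i<3. co B k i c * co B i a b)) = (\<Sum>k<3. P k0 k * (\<Sum>j<3. co B k a j * co B j b c))"
  proof (intro allI impI)
    fix k0 :: nat assume k0: "k0<3"
    have "(\<Sum>k<3. P k0 k * (\<Sum>i<3. co B k i c * co B i a b)) = (\<Sum>i<3. (\<Sum>k<3. P k0 k * co B k i c) * co B i a b)"
      by (rule sh_c1)
    also have "\<dots> = (\<Sum>i<3. (\<Sum>i'<3. \<Sum>c'<3. co A k0 i' c' * P i' i * P c' c) * co B i a b)"
      using k0 h by (simp add: Cr)
    also have "\<dots> = (\<Sum>i'<3. \<Sum>c'<3. co A k0 i' c' * P c' c * (\<Sum>i<3. P i' i * co B i a b))"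
      by (rule sh_c2)
    also have "\<dots> = (\<Sum>i'<3. \<Sum>c'<3. co A k0 i' c' * P c' c * (\<Sum>a'<3. \<Sum>b'<3. co A i' a' b' * P a' a * P b' b))"
      using h by (simp add: Cr)
    also have "\<dots> = (\<Sum>a'<3. \<Sum>b'<3. \<Sum>c'<3. (\<Sum>i'<3. co A k0 i' c' * co A i' a' b') * P a' a * P b' b * P c' c)"
      by (rule sh_c3)
    also have "\<dots> = (\<Sum>a'<3. \<Sum>b'<3. \<Sum>c'<3. (\<Sum>j'<3. co A k0 a' j' * co A j' b' c') * P a' a * P b' b * P c' c)"
      using k0 by (simp add: sb_coass[OF SA])
    also have "\<dots> = (\<Sum>a'<3. \<Sum>j'<3. co A k0 a' j' * P a' a * (\<Sum>b'<3. \<Sum>c'<3. co A j' b' c' * P b' b * P c' c))"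
      by (rule sh_c5[symmetric])
    also have "\<dots> = (\<Sum>a'<3. \<Sum>j'<3. co A k0 a' j' * P a' a * (\<Sum>j<3. P j' j * co B j b c))"
      using h by (simp add: Cr)
    also have "\<dots> = (\<Sum>j<3. (\<Sum>a'<3. \<Sum>j'<3. co A k0 a' j' * P a' a * P j' j) * co B j b c)"
      by (rule sh_c4[symmetric])
    also have "\<dots> = (\<Sum>j<3. (\<Sum>k<3. P k0 k * co B k a j) * co B j b c)"
      using k0 h by (simp add: Cr)
    also have "\<dots> = (\<Sum>k<3. P k0 k * (\<Sum>j<3. co B k a j * co B j b c))"
      by (rule sh_c1[symmetric])
    finally show "(\<Sum>k<3. P k0 k * (\<Sum>i<3. co B k i c * co B i a b)) = (\<Sum>k<3. P k0 k * (\<Sum>j<3. co B k a j * co B j b c))" .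
  qed
  then show "(\<Sum>i<3. co B k i c * co B i a b) = (\<Sum>j<3. co B k a j * co B j b c)"
    using cancel1[OF inv, of "\<lambda>k. \<Sum>i<3. co B k i c * co B i a b" "\<lambda>k. \<Sum>j<3. co B k a j * co B j b c" k] h by simp
qed

lemma B_cul: "\<forall>k<3. \<forall>j<3. (\<Sum>i<3. cu B i * co B k i j) = kd k j"
proof (intro allI impI)
  fix k j :: nat assume h: "k<3" "j<3"
  have "\<forall>k0<3. (\<Sum>k<3. P k0 k * (\<Sum>i<3. cu B i * co B k i j)) = (\<Sum>k<3. P k0 k * kd k j)"
  proof (intro allI impI)
    fix k0 :: nat assume k0: "k0<3"
    have "(\<Sum>k<3. P k0 k * (\<Sum>i<3. cu B i * co B k i j)) = (\<Sum>i<3. cu B i * (\<Sum>k<3. P k0 k * co B k i j))"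
      by (rule sh_e1)
    also have "\<dots> = (\<Sum>i<3. cu B i * (\<Sum>i'<3. \<Sum>j'<3. co A k0 i' j' * P i' i * P j' j))"
      using k0 h by (simp add: Cr)
    also have "\<dots> = (\<Sum>i'<3. \<Sum>j'<3. co A k0 i' j' * (\<Sum>i<3. P i' i * cu B i) * P j' j)"
      by (rule sh_e2)
    also have "\<dots> = (\<Sum>i'<3. \<Sum>j'<3. co A k0 i' j' * cu A i' * P j' j)"
      by (simp add: Er)
    also have "\<dots> = (\<Sum>j'<3. (\<Sum>i'<3. cu A i' * co A k0 i' j') * P j' j)"
      by (rule sh_e3)
    also have "\<dots> = (\<Sum>j'<3. kd k0 j' * P j' j)"
      using k0 by (simp add: sb_cul[OF SA])
    also have "\<dots> = P k0 j" using k0 by (rule kd_sum_l)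
    also have "\<dots> = (\<Sum>k<3. P k0 k * kd k j)" using h by (simp add: kd_sum_r)
    finally show "(\<Sum>k<3. P k0 k * (\<Sum>i<3. cu B i * co B k i j)) = (\<Sum>k<3. P k0 k * kd k j)" .
  qed
  then show "(\<Sum>i<3. cu B i * co B k i j) = kd k j"
    using cancel1[OF inv, of "\<lambda>k. \<Sum>i<3. cu B i * co B k i j" "\<lambda>k. kd k j" k] h by simp
qed

lemma B_cur: "\<forall>k<3. \<forall>i<3. (\<Sum>j<3. co B k i j * cu B j) = kd k i"
proof (intro allI impI)
  fix k i :: nat assume h: "k<3" "i<3"
  have "\<forall>k0<3. (\<Sum>k<3. P k0 k * (\<Sum>j<3. co B k i j * cu B j)) = (\<Sum>k<3. P k0 k * kd k i)"
  proof (intro allI impI)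
    fix k0 :: nat assume k0: "k0<3"
    have "(\<Sum>k<3. P k0 k * (\<Sum>j<3. co B k i j * cu B j)) = (\<Sum>j<3. (\<Sum>k<3. P k0 k * co B k i j) * cu B j)"
      by (rule sh_c1)
    also have "\<dots> = (\<Sum>j<3. (\<Sum>i'<3. \<Sum>j'<3. co A k0 i' j' * P i' i * P j' j) * cu B j)"
      using k0 h by (simp add: Cr)
    also have "\<dots> = (\<Sum>i'<3. \<Sum>j'<3. co A k0 i' j' * P i' i * (\<Sum>j<3. P j' j * cu B j))"
      by (rule sh_c4)
    also have "\<dots> = (\<Sum>i'<3. \<Sum>j'<3. co A k0 i' j' * P i' i * cu A j')"
      by (simp add: Er)
    also have "\<dots> = (\<Sum>i'<3. (\<Sum>j'<3. co A k0 i' j' * cu A j') * P i' i)"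
      by (rule sh_e4)
    also have "\<dots> = (\<Sum>i'<3. kd k0 i' * P i' i)"
      using k0 by (simp add: sb_cur[OF SA])
    also have "\<dots> = P k0 i" using k0 by (rule kd_sum_l)
    also have "\<dots> = (\<Sum>k<3. P k0 k * kd k i)" using h by (simp add: kd_sum_r)
    finally show "(\<Sum>k<3. P k0 k * (\<Sum>j<3. co B k i j * cu B j)) = (\<Sum>k<3. P k0 k * kd k i)" .
  qed
  then show "(\<Sum>j<3. co B k i j * cu B j) = kd k i"
    using cancel1[OF inv, of "\<lambda>k. \<Sum>j<3. co B k i j * cu B j" "\<lambda>k. kd k i" k] h by simp
qed

lemma B_dun: "\<forall>i<3. \<forall>j<3. (\<Sum>k<3. un B k * co B k i j) = un B i * un B j"
proof (intro allI impI)
  fix i j :: nat assume h: "i<3" "j<3"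
  have "(\<Sum>k<3. un B k * co B k i j) = (\<Sum>k<3. (\<Sum>c<3. un A c * P c k) * co B k i j)"
    by (simp add: Ur)
  also have "\<dots> = (\<Sum>c<3. un A c * (\<Sum>k<3. P c k * co B k i j))" by (rule sh_du1)
  also have "\<dots> = (\<Sum>c<3. un A c * (\<Sum>i'<3. \<Sum>j'<3. co A c i' j' * P i' i * P j' j))"
    using h by (simp add: Cr)
  also have "\<dots> = (\<Sum>i'<3. \<Sum>j'<3. (\<Sum>c<3. un A c * co A c i' j') * P i' i * P j' j)" by (rule sh_du2)
  also have "\<dots> = (\<Sum>i'<3. \<Sum>j'<3. (un A i' * un A j') * P i' i * P j' j)" by (simp add: sb_dun[OF SA])
  also have "\<dots> = (\<Sum>i'<3. un A i' * P i' i) * (\<Sum>j'<3. un A j' * P j' j)" by (rule sh_du3)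
  also have "\<dots> = un B i * un B j" using h by (simp add: Ur)
  finally show "(\<Sum>k<3. un B k * co B k i j) = un B i * un B j" .
qed

lemma B_eun: "(\<Sum>k<3. un B k * cu B k) = 1"
proof -
  have "(\<Sum>k<3. un B k * cu B k) = (\<Sum>k<3. (\<Sum>c<3. un A c * P c k) * cu B k)"
    by (simp add: Ur)
  also have "\<dots> = (\<Sum>c<3. un A c * (\<Sum>k<3. P c k * cu B k))" by (rule sh_du1)
  also have "\<dots> = (\<Sum>c<3. un A c * cu A c)" by (simp add: Er)
  also have "\<dots> = 1" by (rule sb_eun[OF SA])
  finally show ?thesis .
qed

lemma B_emul: "\<forall>i<3. \<forall>j<3. (\<Sum>k<3. mu B i j k * cu B k) = cu B i * cu B j"
proof (intro allI impI)
  fix i j :: nat assume h: "i<3" "j<3"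
  have "\<forall>a<3. \<forall>b<3. (\<Sum>i<3. \<Sum>j<3. P a i * P b j * (\<Sum>k<3. mu B i j k * cu B k)) = (\<Sum>i<3. \<Sum>j<3. P a i * P b j * (cu B i * cu B j))"
  proof (intro allI impI)
    fix a b :: nat assume ab: "a<3" "b<3"
    have "(\<Sum>i<3. \<Sum>j<3. P a i * P b j * (\<Sum>k<3. mu B i j k * cu B k)) = (\<Sum>k<3. (\<Sum>i<3. \<Sum>j<3. P a i * P b j * mu B i j k) * cu B k)"
      by (rule sh_em1)
    also have "\<dots> = (\<Sum>k<3. (\<Sum>k'<3. mu A a b k' * P k' k) * cu B k)" using ab by (simp add: Mr)
    also have "\<dots> = (\<Sum>k'<3. mu A a b k' * (\<Sum>k<3. P k' k * cu B k))" by (rule sh_du1)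
    also have "\<dots> = (\<Sum>k'<3. mu A a b k' * cu A k')" by (simp add: Er)
    also have "\<dots> = cu A a * cu A b" using ab by (simp add: sb_emul[OF SA])
    also have "\<dots> = (\<Sum>i<3. P a i * cu B i) * (\<Sum>j<3. P b j * cu B j)" using ab by (simp add: Er)
    also have "\<dots> = (\<Sum>i<3. \<Sum>j<3. P a i * P b j * (cu B i * cu B j))" by (rule sh_em2[symmetric])
    finally show "(\<Sum>i<3. \<Sum>j<3. P a i * P b j * (\<Sum>k<3. mu B i j k * cu B k)) = (\<Sum>i<3. \<Sum>j<3. P a i * P b j * (cu B i * cu B j))" .
  qed
  then show "(\<Sum>k<3. mu B i j k * cu B k) = cu B i * cu B j"
    using cancel2[OF inv, of "\<lambda>i j. \<Sum>k<3. mu B i j k * cu B k" "\<lambda>i j. cu B i * cu B j" i j] h by simp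
qed

lemma D3: assumes h: "i'<3" "j'<3" "l'<3" "m'<3" "p<3" "q<3"
  shows "(\<Sum>i<3. \<Sum>j<3. P i' i * P j' j * (\<Sum>l<3. \<Sum>m<3. P l' l * P m' m * (ksign j l * mu B i l p * mu B j m q)))
    = ksign j' l' * (\<Sum>k<3. mu A i' l' k * P k p) * (\<Sum>k<3. mu A j' m' k * P k q)"
proof -
  have evP: "\<And>x y. x<3 \<Longrightarrow> y<3 \<Longrightarrow> P x y \<noteq> 0 \<Longrightarrow> par x = par y" using ev unfolding evenM_def by blast
  have inner: "(\<Sum>l<3. \<Sum>m<3. P l' l * P m' m * (ksign j l * mu B i l p * mu B j m q)) =
      (\<Sum>l<3. \<Sum>m<3. P l' l * P m' m * (ksign j' l' * mu B i l p * mu B j m q))"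
    if ij: "j<3" "P j' j \<noteq> 0" for i j
  proof (intro sum.cong refl)
    fix l m :: nat assume lm: "l \<in> {..<3}" "m \<in> {..<3}"
    show "P l' l * P m' m * (ksign j l * mu B i l p * mu B j m q) = P l' l * P m' m * (ksign j' l' * mu B i l p * mu B j m q)"
    proof (cases "P l' l = 0")
      case True then show ?thesis by simp
    next
      case False
      then have 1: "par l' = par l" using evP[of l' l] lm h by simp
      have 2: "par j' = par j" using evP[of j' j] ij h by simp
      have k: "ksign j l = ksign j' l'" using ksign_par[of j j' l l'] 1 2 by simp
      show ?thesis by (simp only: k)
    qed
  qed
  have "(\<Sum>i<3. \<Sum>j<3. P i' i * P j' j * (\<Sum>l<3. \<Sum>m<3. P l' l * P m' m * (ksign j l * mu B i l p * mu B j m q)))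
     = (\<Sum>i<3. \<Sum>j<3. P i' i * P j' j * (\<Sum>l<3. \<Sum>m<3. P l' l * P m' m * (ksign j' l' * mu B i l p * mu B j m q)))"
  proof (intro sum.cong refl)
    fix i j :: nat assume ij: "i \<in> {..<3}" "j \<in> {..<3}"
    show "P i' i * P j' j * (\<Sum>l<3. \<Sum>m<3. P l' l * P m' m * (ksign j l * mu B i l p * mu B j m q)) =
          P i' i * P j' j * (\<Sum>l<3. \<Sum>m<3. P l' l * P m' m * (ksign j' l' * mu B i l p * mu B j m q))"
      using inner[of j i] ij by (cases "P j' j = 0") simp_all
  qed
  also have "\<dots> = ksign j' l' * (\<Sum>i<3. \<Sum>l<3. P i' i * P l' l * mu B i l p) * (\<Sum>j<3. \<Sum>m<3. P j' j * P m' m * mu B j m q)"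
    by (rule sh_d3)
  also have "\<dots> = ksign j' l' * (\<Sum>k<3. mu A i' l' k * P k p) * (\<Sum>k<3. mu A j' m' k * P k q)"
    using h by (simp add: Mr)
  finally show ?thesis .
qed

lemma B_dmul: "\<forall>a<3. \<forall>b<3. \<forall>p<3. \<forall>q<3. (\<Sum>k<3. mu B a b k * co B k p q) =
       (\<Sum>i<3. \<Sum>j<3. \<Sum>l<3. \<Sum>m<3. co B a i j * co B b l m * ksign j l * mu B i l p * mu B j m q)"
proof (intro allI impI)
  fix a b p q :: nat assume h: "a<3" "b<3" "p<3" "q<3"
  have "\<forall>a0<3. \<forall>b0<3. (\<Sum>a<3. \<Sum>b<3. P a0 a * P b0 b * (\<Sum>k<3. mu B a b k * co B k p q)) =
     (\<Sum>a<3. \<Sum>b<3. P a0 a * P b0 b * (\<Sum>i<3. \<Sum>j<3. \<Sum>l<3. \<Sum>m<3. co B a i j * co B b l m * ksign j l * mu B i l p * mu B j m q))"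
  proof (intro allI impI)
    fix a0 b0 :: nat assume ab: "a0<3" "b0<3"
    have "(\<Sum>a<3. \<Sum>b<3. P a0 a * P b0 b * (\<Sum>k<3. mu B a b k * co B k p q)) = (\<Sum>k<3. (\<Sum>a<3. \<Sum>b<3. P a0 a * P b0 b * mu B a b k) * co B k p q)"
      by (rule sh_em1)
    also have "\<dots> = (\<Sum>k<3. (\<Sum>k'<3. mu A a0 b0 k' * P k' k) * co B k p q)" using ab by (simp add: Mr)
    also have "\<dots> = (\<Sum>k'<3. mu A a0 b0 k' * (\<Sum>k<3. P k' k * co B k p q))" by (rule sh_du1)
    also have "\<dots> = (\<Sum>k'<3. mu A a0 b0 k' * (\<Sum>i<3. \<Sum>j<3. co A k' i j * P i p * P j q))" using h by (simp add: Cr)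
    also have "\<dots> = (\<Sum>i<3. \<Sum>j<3. (\<Sum>k'<3. mu A a0 b0 k' * co A k' i j) * P i p * P j q)" by (rule sh_du2)
    also have "\<dots> = (\<Sum>i<3. \<Sum>j<3. (\<Sum>i'<3. \<Sum>j'<3. \<Sum>l'<3. \<Sum>m'<3. co A a0 i' j' * co A b0 l' m' * ksign j' l' * mu A i' l' i * mu A j' m' j) * P i p * P j q)"
      using ab by (simp add: sb_dmul[OF SA])
    also have "\<dots> = (\<Sum>i'<3. \<Sum>j'<3. \<Sum>l'<3. \<Sum>m'<3. co A a0 i' j' * co A b0 l' m' * (ksign j' l' * (\<Sum>k<3. mu A i' l' k * P k p) * (\<Sum>k<3. mu A j' m' k * P k q)))"
      by (rule D4[symmetric])
    also have "\<dots> = (\<Sum>i'<3. \<Sum>j'<3. \<Sum>l'<3. \<Sum>m'<3. co A a0 i' j' * co A b0 l' m' * (\<Sum>i<3. \<Sum>j<3. P i' i * P j' j * (\<Sum>l<3. \<Sum>m<3. P l' l * P m' m * (ksign j l * mu B i l p * mu B j m q))))"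
      using h by (simp add: D3)
    also have "\<dots> = (\<Sum>i<3. \<Sum>j<3. \<Sum>l<3. \<Sum>m<3. (\<Sum>i'<3. \<Sum>j'<3. co A a0 i' j' * P i' i * P j' j) * (\<Sum>l'<3. \<Sum>m'<3. co A b0 l' m' * P l' l * P m' m) * ksign j l * mu B i l p * mu B j m q)"
      by (rule D2[symmetric])
    also have "\<dots> = (\<Sum>i<3. \<Sum>j<3. \<Sum>l<3. \<Sum>m<3. (\<Sum>a<3. P a0 a * co B a i j) * (\<Sum>b<3. P b0 b * co B b l m) * ksign j l * mu B i l p * mu B j m q)"
      using ab by (simp add: Cr)
    also have "\<dots> = (\<Sum>a<3. \<Sum>b<3. P a0 a * P b0 b * (\<Sum>i<3. \<Sum>j<3. \<Sum>l<3. \<Sum>m<3. co B a i j * co B b l m * ksign j l * mu B i l p * mu B j m q))"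
      by (rule D1[symmetric])
    finally show "(\<Sum>a<3. \<Sum>b<3. P a0 a * P b0 b * (\<Sum>k<3. mu B a b k * co B k p q)) =
     (\<Sum>a<3. \<Sum>b<3. P a0 a * P b0 b * (\<Sum>i<3. \<Sum>j<3. \<Sum>l<3. \<Sum>m<3. co B a i j * co B b l m * ksign j l * mu B i l p * mu B j m q))" .
  qed
  then show "(\<Sum>k<3. mu B a b k * co B k p q) =
       (\<Sum>i<3. \<Sum>j<3. \<Sum>l<3. \<Sum>m<3. co B a i j * co B b l m * ksign j l * mu B i l p * mu B j m q)"
    using cancel2[OF inv, of "\<lambda>a b. \<Sum>k<3. mu B a b k * co B k p q" "\<lambda>a b. \<Sum>i<3. \<Sum>j<3. \<Sum>l<3. \<Sum>m<3. co B a i j * co B b l m * ksign j l * mu B i l p * mu B j m q" a b] h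
    by simp
qed

lemma super: "superbialg3 B"
  by (rule sbI[OF B_gmu B_un2 B_gco B_cu2 B_assoc B_unit B_coass B_cul B_cur B_dun B_eun B_emul B_dmul])

end
end

context fixes dummy :: "'a::comm_ring_1" begin
lemma sh_s1: fixes Q1 Q2 Z :: "nat \<Rightarrow> 'a" and M :: "nat \<Rightarrow> nat \<Rightarrow> nat \<Rightarrow> 'a" and R :: "nat \<Rightarrow> nat \<Rightarrow> 'a"
  shows "(\<Sum>k<3. (\<Sum>a<3. \<Sum>b<3. Q1 a * Q2 b * (\<Sum>k'<3. M a b k' * R k' k)) * Z k) = (\<Sum>a<3. \<Sum>b<3. Q1 a * Q2 b * (\<Sum>k'<3. M a b k' * (\<Sum>k<3. R k' k * Z k)))"
  unfolding sum3 by (simp add: algebra_simps)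
lemma sh_s2: fixes Q1 R S :: "nat \<Rightarrow> 'a" and Z :: "nat \<Rightarrow> nat \<Rightarrow> nat \<Rightarrow> 'a"
  shows "(\<Sum>i<3. \<Sum>j<3. (\<Sum>a<3. Q1 a * Z a i j) * R i * S j) = (\<Sum>a<3. Q1 a * (\<Sum>i<3. \<Sum>j<3. Z a i j * R i * S j))"
  unfolding sum3 by (simp add: algebra_simps)
lemma sh_s3: fixes R S :: "nat \<Rightarrow> 'a" and F T :: "nat \<Rightarrow> nat \<Rightarrow> 'a"
  shows "(\<Sum>i<3. \<Sum>j<3. (\<Sum>i'<3. \<Sum>j'<3. F i' j' * T i' i * T j' j) * R i * S j) = (\<Sum>i'<3. \<Sum>j'<3. F i' j' * (\<Sum>i<3. T i' i * R i) * (\<Sum>j<3. T j' j * S j))"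
  unfolding sum3 by (simp add: algebra_simps)
lemma sh_t1: fixes A B C D :: "nat \<Rightarrow> nat \<Rightarrow> 'a"
  shows "(\<Sum>j<3. (\<Sum>m<3. A i m * B m j) * (\<Sum>n<3. C j n * D n k)) = (\<Sum>m<3. \<Sum>n<3. A i m * (\<Sum>j<3. B m j * C j n) * D n k)"
  unfolding sum3 by (simp add: algebra_simps)
lemma sh_t2: fixes M :: "nat \<Rightarrow> nat \<Rightarrow> nat \<Rightarrow> 'a" and A B :: "nat \<Rightarrow> nat \<Rightarrow> 'a"
  shows "(\<Sum>k<3. M a b k * (\<Sum>m<3. A k m * B m c)) = (\<Sum>m<3. (\<Sum>k<3. M a b k * A k m) * B m c)"
  unfolding sum3 by (simp add: algebra_simps)
lemma sh_t3: fixes A B :: "nat \<Rightarrow> nat \<Rightarrow> 'a" and N :: "nat \<Rightarrow> nat \<Rightarrow> nat \<Rightarrow> 'a"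
  shows "(\<Sum>m<3. (\<Sum>i<3. \<Sum>j<3. A a i * A b j * N i j m) * B m c) = (\<Sum>i<3. \<Sum>j<3. A a i * A b j * (\<Sum>m<3. N i j m * B m c))"
  unfolding sum3 by (simp add: algebra_simps)
lemma sh_t4: fixes A B :: "nat \<Rightarrow> nat \<Rightarrow> 'a" and N :: "nat \<Rightarrow> nat \<Rightarrow> nat \<Rightarrow> 'a"
  shows "(\<Sum>i<3. \<Sum>j<3. A a i * A b j * (\<Sum>i'<3. \<Sum>j'<3. B i i' * B j j' * N i' j' c)) = (\<Sum>i'<3. \<Sum>j'<3. (\<Sum>i<3. A a i * B i i') * (\<Sum>j<3. A b j * B j j') * N i' j' c)"
  unfolding sum3 by (simp add: algebra_simps)
lemma sh_t5: fixes A B :: "nat \<Rightarrow> nat \<Rightarrow> 'a" and N :: "nat \<Rightarrow> nat \<Rightarrow> nat \<Rightarrow> 'a"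
  shows "(\<Sum>i<3. \<Sum>j<3. N a i j * (\<Sum>m<3. A i m * B m p) * (\<Sum>n<3. A j n * B n q)) = (\<Sum>m<3. \<Sum>n<3. (\<Sum>i<3. \<Sum>j<3. N a i j * A i m * A j n) * B m p * B n q)"
  unfolding sum3 by (simp add: algebra_simps)
lemma sh_t6: fixes A B :: "nat \<Rightarrow> nat \<Rightarrow> 'a" and N :: "nat \<Rightarrow> nat \<Rightarrow> nat \<Rightarrow> 'a"
  shows "(\<Sum>m<3. \<Sum>n<3. (\<Sum>k<3. A a k * N k m n) * B m p * B n q) = (\<Sum>k<3. A a k * (\<Sum>m<3. \<Sum>n<3. N k m n * B m p * B n q))"
  unfolding sum3 by (simp add: algebra_simps)
lemma sh_t7: fixes A B :: "nat \<Rightarrow> nat \<Rightarrow> 'a" and N :: "nat \<Rightarrow> nat \<Rightarrow> nat \<Rightarrow> 'a"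
  shows "(\<Sum>k<3. A a k * (\<Sum>k'<3. B k k' * N k' p q)) = (\<Sum>k'<3. (\<Sum>k<3. A a k * B k k') * N k' p q)"
  unfolding sum3 by (simp add: algebra_simps)
end

lemma kd2: "i<3 \<Longrightarrow> j<3 \<Longrightarrow> (\<Sum>i'<3. \<Sum>j'<3. kd i i' * kd j j' * X i' j') = (X i j :: 'a::ring_1)"
  using less3[of i] less3[of j] by (auto simp: sum3 kd_def)

lemma kd2': "i<3 \<Longrightarrow> j<3 \<Longrightarrow> (\<Sum>i'<3. \<Sum>j'<3. kd i' i * kd j' j * X i' j') = (X i j :: 'a::ring_1)"
  using less3[of i] less3[of j] by (auto simp: sum3 kd_def)

lemma evenM_iff: "evenM P \<longleftrightarrow> P 0 2 = 0 \<and> P 1 2 = 0 \<and> P 2 0 = 0 \<and> P 2 1 = 0"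
  unfolding evenM_def all3 by auto

lemma inv3_sym: "inv3 P Q \<Longrightarrow> inv3 Q P"
  unfolding inv3_def by blast

context isoctx begin

lemma iso_sym: "isoM B A Q"
  unfolding isoM_def
proof (intro conjI allI impI)
  fix a b c :: nat assume h: "a<3" "b<3" "c<3"
  have "(\<Sum>k<3. mu B a b k * Q k c) = (\<Sum>k<3. (\<Sum>a'<3. \<Sum>b'<3. Q a a' * Q b b' * (\<Sum>k'<3. mu A a' b' k' * P k' k)) * Q k c)"
    using h by (simp add: FBmu)
  also have "\<dots> = (\<Sum>a'<3. \<Sum>b'<3. Q a a' * Q b b' * (\<Sum>k'<3. mu A a' b' k' * (\<Sum>k<3. P k' k * Q k c)))"
    by (rule sh_s1)
  also have "\<dots> = (\<Sum>a'<3. \<Sum>b'<3. Q a a' * Q b b' * (\<Sum>k'<3. mu A a' b' k' * kd k' c))"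
    using h by (simp add: PQ)
  also have "\<dots> = (\<Sum>i<3. \<Sum>j<3. Q a i * Q b j * mu A i j c)"
    using h by (simp add: kd_sum_r)
  finally show "(\<Sum>k<3. mu B a b k * Q k c) = (\<Sum>i<3. \<Sum>j<3. Q a i * Q b j * mu A i j c)" .
next
  fix c :: nat assume h: "c<3"
  have "(\<Sum>k<3. un B k * Q k c) = (\<Sum>k<3. (\<Sum>j<3. un A j * P j k) * Q k c)" by (simp add: Ur)
  also have "\<dots> = (\<Sum>j<3. un A j * (\<Sum>k<3. P j k * Q k c))" by (rule sh_du1)
  also have "\<dots> = (\<Sum>j<3. un A j * kd j c)" using h by (simp add: PQ)
  also have "\<dots> = un A c" using h by (rule kd_sum_r)
  finally show "(\<Sum>k<3. un B k * Q k c) = un A c" .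
next
  fix a p q :: nat assume h: "a<3" "p<3" "q<3"
  have "(\<Sum>i<3. \<Sum>j<3. co B a i j * Q i p * Q j q) = (\<Sum>i<3. \<Sum>j<3. (\<Sum>a'<3. Q a a' * (\<Sum>i'<3. \<Sum>j'<3. co A a' i' j' * P i' i * P j' j)) * Q i p * Q j q)"
    using h by (simp add: FBco)
  also have "\<dots> = (\<Sum>a'<3. Q a a' * (\<Sum>i<3. \<Sum>j<3. (\<Sum>i'<3. \<Sum>j'<3. co A a' i' j' * P i' i * P j' j) * Q i p * Q j q))"
    by (rule sh_s2)
  also have "\<dots> = (\<Sum>a'<3. Q a a' * (\<Sum>i'<3. \<Sum>j'<3. co A a' i' j' * (\<Sum>i<3. P i' i * Q i p) * (\<Sum>j<3. P j' j * Q j q)))"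
    by (simp only: sh_s3)
  also have "\<dots> = (\<Sum>a'<3. Q a a' * (\<Sum>i'<3. \<Sum>j'<3. kd i' p * kd j' q * co A a' i' j'))"
    using h by (simp add: PQ mult_ac)
  also have "\<dots> = (\<Sum>k<3. Q a k * co A k p q)"
    using h by (simp add: kd2')
  finally show "(\<Sum>i<3. \<Sum>j<3. co B a i j * Q i p * Q j q) = (\<Sum>k<3. Q a k * co A k p q)" .
next
  fix a :: nat assume h: "a<3"
  show "(\<Sum>k<3. Q a k * cu A k) = cu B a" using h by (simp add: FBcu)
qed

end

lemma iso_trans:
  assumes e1: "evenM P1" and i1: "inv3 P1 Q1" and m1: "isoM A B P1"
    and e2: "evenM P2" and i2: "inv3 P2 Q2" and m2: "isoM B C P2"
  shows "evenM (\<lambda>i k. \<Sum>j<3. P1 i j * P2 j k)" "inv3 (\<lambda>i k. \<Sum>j<3. P1 i j * P2 j k) (\<lambda>i k. \<Sum>j<3. Q2 i j * Q1 j k)"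
    "isoM A C (\<lambda>i k. \<Sum>j<3. P1 i j * P2 j k)"
proof -
  interpret I1: isoctx A B P1 Q1 using e1 i1 m1 by unfold_locales
  interpret I2: isoctx B C P2 Q2 using e2 i2 m2 by unfold_locales
  show "evenM (\<lambda>i k. \<Sum>j<3. P1 i j * P2 j k)"
    unfolding evenM_iff by (simp add: sum3 I1.Pz I2.Pz)
  show "inv3 (\<lambda>i k. \<Sum>j<3. P1 i j * P2 j k) (\<lambda>i k. \<Sum>j<3. Q2 i j * Q1 j k)"
    unfolding inv3_def
  proof (intro allI impI conjI)
    fix i k :: nat assume h: "i<3" "k<3"
    have "(\<Sum>j<3. (\<Sum>m<3. P1 i m * P2 m j) * (\<Sum>n<3. Q2 j n * Q1 n k)) = (\<Sum>m<3. \<Sum>n<3. P1 i m * (\<Sum>j<3. P2 m j * Q2 j n) * Q1 n k)"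
      by (rule sh_t1)
    also have "\<dots> = (\<Sum>m<3. \<Sum>n<3. P1 i m * kd m n * Q1 n k)" by (simp add: I2.PQ)
    also have "\<dots> = (\<Sum>m<3. P1 i m * Q1 m k)" using less3 by (simp add: sum3 kd_def)
    also have "\<dots> = kd i k" using h by (simp add: I1.PQ)
    finally show "(\<Sum>j<3. (\<Sum>m<3. P1 i m * P2 m j) * (\<Sum>n<3. Q2 j n * Q1 n k)) = kd i k" .
    have "(\<Sum>j<3. (\<Sum>m<3. Q2 i m * Q1 m j) * (\<Sum>n<3. P1 j n * P2 n k)) = (\<Sum>m<3. \<Sum>n<3. Q2 i m * (\<Sum>j<3. Q1 m j * P1 j n) * P2 n k)"
      by (rule sh_t1)
    also have "\<dots> = (\<Sum>m<3. \<Sum>n<3. Q2 i m * kd m n * P2 n k)" by (simp add: I1.QP)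
    also have "\<dots> = (\<Sum>m<3. Q2 i m * P2 m k)" using less3 by (simp add: sum3 kd_def)
    also have "\<dots> = kd i k" using h by (simp add: I2.QP)
    finally show "(\<Sum>j<3. (\<Sum>m<3. Q2 i m * Q1 m j) * (\<Sum>n<3. P1 j n * P2 n k)) = kd i k" .
  qed
  show "isoM A C (\<lambda>i k. \<Sum>j<3. P1 i j * P2 j k)"
    unfolding isoM_def
  proof (intro conjI allI impI)
    fix a b c :: nat assume h: "a<3" "b<3" "c<3"
    have "(\<Sum>k<3. mu A a b k * (\<Sum>m<3. P1 k m * P2 m c)) = (\<Sum>m<3. (\<Sum>k<3. mu A a b k * P1 k m) * P2 m c)"
      by (rule sh_t2)
    also have "\<dots> = (\<Sum>m<3. (\<Sum>i<3. \<Sum>j<3. P1 a i * P1 b j * mu B i j m) * P2 m c)"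
      using h by (simp add: I1.Mr)
    also have "\<dots> = (\<Sum>i<3. \<Sum>j<3. P1 a i * P1 b j * (\<Sum>m<3. mu B i j m * P2 m c))"
      by (rule sh_t3)
    also have "\<dots> = (\<Sum>i<3. \<Sum>j<3. P1 a i * P1 b j * (\<Sum>i'<3. \<Sum>j'<3. P2 i i' * P2 j j' * mu C i' j' c))"
      using h by (simp add: I2.Mr)
    also have "\<dots> = (\<Sum>i'<3. \<Sum>j'<3. (\<Sum>i<3. P1 a i * P2 i i') * (\<Sum>j<3. P1 b j * P2 j j') * mu C i' j' c)"
      by (rule sh_t4)
    finally show "(\<Sum>k<3. mu A a b k * (\<Sum>j<3. P1 k j * P2 j c)) = (\<Sum>i<3. \<Sum>j<3. (\<Sum>j'<3. P1 a j' * P2 j' i) * (\<Sum>j'<3. P1 b j' * P2 j' j) * mu C i j c)" .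
  next
    fix c :: nat assume h: "c<3"
    have "(\<Sum>k<3. un A k * (\<Sum>j<3. P1 k j * P2 j c)) = (\<Sum>j<3. (\<Sum>k<3. un A k * P1 k j) * P2 j c)"
      unfolding sum3 by (simp add: algebra_simps)
    also have "\<dots> = (\<Sum>j<3. un B j * P2 j c)" by (simp add: I1.Ur)
    also have "\<dots> = un C c" using h by (simp add: I2.Ur)
    finally show "(\<Sum>k<3. un A k * (\<Sum>j<3. P1 k j * P2 j c)) = un C c" .
  next
    fix a p q :: nat assume h: "a<3" "p<3" "q<3"
    have "(\<Sum>i<3. \<Sum>j<3. co A a i j * (\<Sum>m<3. P1 i m * P2 m p) * (\<Sum>n<3. P1 j n * P2 n q)) = (\<Sum>m<3. \<Sum>n<3. (\<Sum>i<3. \<Sum>j<3. co A a i j * P1 i m * P1 j n) * P2 m p * P2 n q)"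
      by (rule sh_t5)
    also have "\<dots> = (\<Sum>m<3. \<Sum>n<3. (\<Sum>k<3. P1 a k * co B k m n) * P2 m p * P2 n q)"
      using h by (simp add: I1.Cr)
    also have "\<dots> = (\<Sum>k<3. P1 a k * (\<Sum>m<3. \<Sum>n<3. co B k m n * P2 m p * P2 n q))"
      by (rule sh_t6)
    also have "\<dots> = (\<Sum>k<3. P1 a k * (\<Sum>k'<3. P2 k k' * co C k' p q))"
      using h by (simp add: I2.Cr)
    also have "\<dots> = (\<Sum>k'<3. (\<Sum>k<3. P1 a k * P2 k k') * co C k' p q)"
      by (rule sh_t7)
    finally show "(\<Sum>i<3. \<Sum>j<3. co A a i j * (\<Sum>j'<3. P1 i j' * P2 j' p) * (\<Sum>j'<3. P1 j j' * P2 j' q)) = (\<Sum>k<3. (\<Sum>j<3. P1 a j * P2 j k) * co C k p q)" .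
  next
    fix a :: nat assume h: "a<3"
    have "(\<Sum>k<3. (\<Sum>j<3. P1 a j * P2 j k) * cu C k) = (\<Sum>j<3. P1 a j * (\<Sum>k<3. P2 j k * cu C k))"
      unfolding sum3 by (simp add: algebra_simps)
    also have "\<dots> = (\<Sum>j<3. P1 a j * cu B j)" by (simp add: I2.Er)
    also have "\<dots> = cu A a" using h by (simp add: I1.Er)
    finally show "(\<Sum>k<3. (\<Sum>j<3. P1 a j * P2 j k) * cu C k) = cu A a" .
  qed
qed

lemma sb_iso_sym: "sb_iso A B \<Longrightarrow> sb_iso B A"
proof -
  assume "sb_iso A B"
  then obtain P Q where "evenM P" "inv3 P Q" "isoM A B P" unfolding sb_iso_iff by blast
  then interpret isoctx A B P Q by unfold_locales
  show "sb_iso B A" unfolding sb_iso_iff using evQ inv3_sym[OF inv] iso_sym by blast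
qed

lemma sb_iso_trans: "sb_iso A B \<Longrightarrow> sb_iso B C \<Longrightarrow> sb_iso A C"
proof -
  assume "sb_iso A B" "sb_iso B C"
  then obtain P1 Q1 P2 Q2 where "evenM P1" "inv3 P1 Q1" "isoM A B P1" "evenM P2" "inv3 P2 Q2" "isoM B C P2"
    unfolding sb_iso_iff by blast
  from iso_trans[OF this] show "sb_iso A C" unfolding sb_iso_iff by blast
qed

lemma sb_iso_super: "sb_iso A B \<Longrightarrow> superbialg3 A \<Longrightarrow> superbialg3 B"
proof -
  assume "sb_iso A B" "superbialg3 A"
  then obtain P Q where "evenM P" "inv3 P Q" "isoM A B P" unfolding sb_iso_iff by blast
  then interpret isoctx A B P Q by unfold_locales
  show "superbialg3 B" using super \<open>superbialg3 A\<close> by blast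
qed

definition transp :: "'a::field sbd \<Rightarrow> (nat \<Rightarrow> nat \<Rightarrow> 'a) \<Rightarrow> (nat \<Rightarrow> nat \<Rightarrow> 'a) \<Rightarrow> 'a sbd" where
  "transp A P Q = \<lparr>mu = (\<lambda>i j c. \<Sum>a<3. \<Sum>b<3. Q i a * Q j b * (\<Sum>k<3. mu A a b k * P k c)),
     un = (\<lambda>c. \<Sum>k<3. un A k * P k c),
     co = (\<lambda>k p q. \<Sum>a<3. Q k a * (\<Sum>i<3. \<Sum>j<3. co A a i j * P i p * P j q)),
     cu = (\<lambda>k. \<Sum>a<3. Q k a * cu A a)\<rparr>"

lemma transp_iso: assumes inv: "inv3 P Q" shows "isoM A (transp A P Q) P"
proof -
  have PQ: "\<And>i k. i<3 \<Longrightarrow> k<3 \<Longrightarrow> (\<Sum>j<3. P i j * Q j k) = kd i k" using inv unfolding inv3_def by blast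
  show ?thesis unfolding isoM_def
  proof (intro conjI allI impI)
    fix a b c :: nat assume h: "a<3" "b<3" "c<3"
    have "(\<Sum>i<3. \<Sum>j<3. P a i * P b j * mu (transp A P Q) i j c) = (\<Sum>i<3. \<Sum>j<3. P a i * P b j * (\<Sum>a'<3. \<Sum>b'<3. Q i a' * Q j b' * (\<Sum>k<3. mu A a' b' k * P k c)))"
      by (simp add: transp_def)
    also have "\<dots> = (\<Sum>a'<3. \<Sum>b'<3. (\<Sum>i<3. P a i * Q i a') * (\<Sum>j<3. P b j * Q j b') * (\<Sum>k<3. mu A a' b' k * P k c))"
      by (rule sh_fb)
    also have "\<dots> = (\<Sum>a'<3. \<Sum>b'<3. kd a a' * kd b b' * (\<Sum>k<3. mu A a' b' k * P k c))"
      using h by (simp add: PQ)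
    also have "\<dots> = (\<Sum>k<3. mu A a b k * P k c)" using h(1,2) by (rule kd2)
    finally show "(\<Sum>k<3. mu A a b k * P k c) = (\<Sum>i<3. \<Sum>j<3. P a i * P b j * mu (transp A P Q) i j c)" by simp
  next
    fix c :: nat show "(\<Sum>k<3. un A k * P k c) = un (transp A P Q) c" by (simp add: transp_def)
  next
    fix a p q :: nat assume h: "a<3" "p<3" "q<3"
    have "(\<Sum>k<3. P a k * co (transp A P Q) k p q) = (\<Sum>k<3. P a k * (\<Sum>a'<3. Q k a' * (\<Sum>i<3. \<Sum>j<3. co A a' i j * P i p * P j q)))"
      by (simp add: transp_def)
    also have "\<dots> = (\<Sum>a'<3. (\<Sum>k<3. P a k * Q k a') * (\<Sum>i<3. \<Sum>j<3. co A a' i j * P i p * P j q))"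
      by (rule sh_lin)
    also have "\<dots> = (\<Sum>a'<3. kd a a' * (\<Sum>i<3. \<Sum>j<3. co A a' i j * P i p * P j q))"
      using h by (simp add: PQ)
    also have "\<dots> = (\<Sum>i<3. \<Sum>j<3. co A a i j * P i p * P j q)" using h(1) by (rule kd_sum_l)
    finally show "(\<Sum>i<3. \<Sum>j<3. co A a i j * P i p * P j q) = (\<Sum>k<3. P a k * co (transp A P Q) k p q)" by simp
  next
    fix a :: nat assume h: "a<3"
    have "(\<Sum>k<3. P a k * cu (transp A P Q) k) = (\<Sum>k<3. P a k * (\<Sum>a'<3. Q k a' * cu A a'))"
      by (simp add: transp_def)
    also have "\<dots> = (\<Sum>a'<3. (\<Sum>k<3. P a k * Q k a') * cu A a')" by (rule sh_lin)
    also have "\<dots> = (\<Sum>a'<3. kd a a' * cu A a')" using h by (simp add: PQ)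
    also have "\<dots> = cu A a" using h by (rule kd_sum_l)
    finally show "(\<Sum>k<3. P a k * cu (transp A P Q) k) = cu A a" .
  qed
qed

lemma transp_sb: "evenM P \<Longrightarrow> inv3 P Q \<Longrightarrow> sb_iso A (transp A P Q)"
  unfolding sb_iso_iff using transp_iso by blast

lemma id_iso:
  assumes "\<forall>i<3. \<forall>j<3. \<forall>k<3. mu B i j k = mu C i j k" "\<forall>k<3. un B k = un C k"
    "\<forall>k<3. \<forall>i<3. \<forall>j<3. co B k i j = co C k i j" "\<forall>k<3. cu B k = cu C k"
  shows "sb_iso B C"
proof -
  have e: "evenM (kd :: nat \<Rightarrow> nat \<Rightarrow> 'a::field)" unfolding evenM_iff by (simp add: kd_def)
  have i: "inv3 (kd :: nat \<Rightarrow> nat \<Rightarrow> 'a) kd" unfolding inv3_def by (simp add: kd_sum_l)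
  have m: "isoM B C kd" unfolding isoM_def using assms
    by (simp add: kd_sum_l kd_sum_r kd2)
  show ?thesis unfolding sb_iso_iff using e i m by blast
qed

lemma model_sb1: "superbialg3 (model 1 :: 'a::field sbd)"
  unfolding superbialg3_def all3
  by (simp add: model_def mk_def mul21_def bv_def tb_def dx0_def sum3 kd_def ksign_def par_def)

lemma model_sb2: "superbialg3 (model 2 :: 'a::field sbd)"
  unfolding superbialg3_def all3
  by (simp add: model_def mk_def mul21_def coop_def bv_def tb_def dx0_def sum3 kd_def ksign_def par_def)

lemma model_sb3: "superbialg3 (model 3 :: 'a::field sbd)"
  unfolding superbialg3_def all3
  by (simp add: model_def mk_def mul22_def bv_def tb_def dx0_def sum3 kd_def ksign_def par_def)

lemma model_sb4: "superbialg3 (model 4 :: 'a::field sbd)"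
  unfolding superbialg3_def all3
  by (simp add: model_def mk_def mul22_def bv_def tb_def dx0_def sum3 kd_def ksign_def par_def)

lemma model_sb5: "superbialg3 (model 5 :: 'a::field sbd)"
  unfolding superbialg3_def all3
  by (simp add: model_def mk_def mul22_def bv_def tb_def dx0_def sum3 kd_def ksign_def par_def)

lemma model_sb6: "superbialg3 (model 6 :: 'a::field sbd)"
  unfolding superbialg3_def all3
  by (simp add: model_def mk_def mul22_def bv_def tb_def dx0_def sum3 kd_def ksign_def par_def)

lemma model_sb7: "superbialg3 (model 7 :: 'a::field sbd)"
  unfolding superbialg3_def all3
  by (simp add: model_def mk_def mul23_def bv_def tb_def dx0_def sum3 kd_def ksign_def par_def)

lemma model_sb8: "superbialg3 (model 8 :: 'a::field sbd)"
  unfolding superbialg3_def all3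
  by (simp add: model_def mk_def mul23_def bv_def tb_def dx0_def sum3 kd_def ksign_def par_def)

lemma model_sb9: "superbialg3 (model 9 :: 'a::field sbd)"
  unfolding superbialg3_def all3
  by (simp add: model_def mk_def mul23_def coop_def bv_def tb_def dx0_def sum3 kd_def ksign_def par_def)

lemma model_sb10: "superbialg3 (model 10 :: 'a::field sbd)"
  unfolding superbialg3_def all3
  by (simp add: model_def mk_def mul23_def bv_def tb_def dx0_def sum3 kd_def ksign_def par_def)

lemma model_sb11: "superbialg3 (model 11 :: 'a::field sbd)"
  unfolding superbialg3_def all3
  by (simp add: model_def mk_def mul23_def bv_def tb_def dx0_def sum3 kd_def ksign_def par_def)

lemma upto11: "n \<in> {1..11::nat} \<Longrightarrow> n = 1 \<or> n = 2 \<or> n = 3 \<or> n = 4 \<or> n = 5 \<or> n = 6 \<or> n = 7 \<or> n = 8 \<or> n = 9 \<or> n = 10 \<or> n = 11"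
  unfolding atLeastAtMost_iff by presburger

lemma models_sb: "n \<in> {1..11} \<Longrightarrow> superbialg3 (model n :: 'a::field sbd)"
  using upto11[of n] model_sb1 model_sb2 model_sb3 model_sb4 model_sb5 model_sb6 model_sb7 model_sb8 model_sb9 model_sb10 model_sb11 by auto

definition mat3 :: "'a \<Rightarrow> 'a \<Rightarrow> 'a \<Rightarrow> 'a \<Rightarrow> 'a \<Rightarrow> nat \<Rightarrow> nat \<Rightarrow> 'a::zero" where
  "mat3 a b c d e = (\<lambda>i j. if i = 0 \<and> j = 0 then a else if i = 0 \<and> j = 1 then b else
     if i = 1 \<and> j = 0 then c else if i = 1 \<and> j = 1 then d else if i = 2 \<and> j = 2 then e else 0)"

lemma mat3_simps[simp]: "mat3 a b c d e 0 0 = a" "mat3 a b c d e 0 1 = b" "mat3 a b c d e 1 0 = c"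
  "mat3 a b c d e 1 1 = d" "mat3 a b c d e 2 2 = e" "mat3 a b c d e 0 2 = 0" "mat3 a b c d e 1 2 = 0"
  "mat3 a b c d e 2 0 = 0" "mat3 a b c d e 2 1 = 0"
  by (simp_all add: mat3_def)

lemma mat3_even: "evenM (mat3 a b c d e)" unfolding evenM_iff by simp

lemma mat3_inv: fixes a b c d e a' b' c' d' e' :: "'a::field"
  assumes "a*a' + b*c' = 1" "a*b' + b*d' = 0" "c*a' + d*c' = 0" "c*b' + d*d' = 1" "e*e' = 1"
     "a'*a + b'*c = 1" "a'*b + b'*d = 0" "c'*a + d'*c = 0" "c'*b + d'*d = 1"
  shows "inv3 (mat3 a b c d e) (mat3 a' b' c' d' e')"
  unfolding inv3_def all3 using assms by (simp add: sum3 kd_def mult.commute)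

lemma sqrt_ex:
  assumes ac: "\<forall>p :: 'a::field poly. degree p > 0 \<longrightarrow> (\<exists>z. poly p z = 0)"
  shows "\<exists>z::'a. z * z = c"
proof -
  have "degree [:-c, 0, 1:] > 0" by simp
  then obtain z where "poly [:-c, 0, 1:] z = 0" using ac by blast
  then have "z * z = c" by (simp add: algebra_simps)
  then show ?thesis by blast
qed

lemma muz: "superbialg3 B \<Longrightarrow> i<3 \<Longrightarrow> j<3 \<Longrightarrow> k<3 \<Longrightarrow> par k \<noteq> (par i + par j) mod 2 \<Longrightarrow> mu B i j k = 0"
  using sb_gmu by blast
lemma coz: "superbialg3 B \<Longrightarrow> k<3 \<Longrightarrow> i<3 \<Longrightarrow> j<3 \<Longrightarrow> (par i + par j) mod 2 \<noteq> par k \<Longrightarrow> co B k i j = 0"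
  using sb_gco by blast

lemma gz:
  assumes S: "superbialg3 B"
  shows "mu B 1 1 2 = 0" "mu B 1 2 0 = 0" "mu B 1 2 1 = 0" "mu B 2 1 0 = 0" "mu B 2 1 1 = 0" "mu B 2 2 2 = 0"
    "mu B 0 0 2 = 0" "mu B 0 1 2 = 0" "mu B 1 0 2 = 0" "mu B 0 2 0 = 0" "mu B 0 2 1 = 0" "mu B 2 0 0 = 0" "mu B 2 0 1 = 0"
    "co B 0 0 2 = 0" "co B 0 1 2 = 0" "co B 0 2 0 = 0" "co B 0 2 1 = 0"
    "co B 1 0 2 = 0" "co B 1 1 2 = 0" "co B 1 2 0 = 0" "co B 1 2 1 = 0"
    "co B 2 0 0 = 0" "co B 2 0 1 = 0" "co B 2 1 0 = 0" "co B 2 1 1 = 0" "co B 2 2 2 = 0"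
    "cu B 2 = 0" "un B 2 = 0"
  by (simp_all add: muz[OF S] coz[OF S] sb_cu2[OF S] sb_un2[OF S])

lemma unit_facts:
  assumes S: "superbialg3 B" and u: "un B 0 = 1" "un B 1 = 0"
  shows "mu B 0 0 0 = 1" "mu B 0 0 1 = 0" "mu B 0 1 0 = 0" "mu B 0 1 1 = 1" "mu B 0 2 2 = 1"
    "mu B 1 0 0 = 0" "mu B 1 0 1 = 1" "mu B 2 0 2 = 1"
    "cu B 0 = 1" "co B 0 0 0 = 1" "co B 0 0 1 = 0" "co B 0 1 0 = 0" "co B 0 1 1 = 0" "co B 0 2 2 = 0"
proof -
  have u2: "un B 2 = 0" by (rule sb_un2[OF S])
  have l: "\<And>i k. i<3 \<Longrightarrow> k<3 \<Longrightarrow> mu B 0 i k = kd i k"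
    using sb_unl[OF S] u u2 by (simp add: sum3)
  have r: "\<And>i k. i<3 \<Longrightarrow> k<3 \<Longrightarrow> mu B i 0 k = kd i k"
    using sb_unr[OF S] u u2 by (simp add: sum3)
  show "mu B 0 0 0 = 1" "mu B 0 0 1 = 0" "mu B 0 1 0 = 0" "mu B 0 1 1 = 1" "mu B 0 2 2 = 1"
    "mu B 1 0 0 = 0" "mu B 1 0 1 = 1" "mu B 2 0 2 = 1"
    by (simp_all add: l r kd_def)
  show "cu B 0 = 1" using sb_eun[OF S] u u2 by (simp add: sum3)
  have d: "\<And>i j. i<3 \<Longrightarrow> j<3 \<Longrightarrow> co B 0 i j = un B i * un B j"
    using sb_dun[OF S] u u2 by (simp add: sum3)
  show "co B 0 0 0 = 1" "co B 0 0 1 = 0" "co B 0 1 0 = 0" "co B 0 1 1 = 0" "co B 0 2 2 = 0"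
    by (simp_all add: d u u2)
qed

lemma stage1:
  assumes SA: "superbialg3 (A::'a::field sbd)"
  shows "\<exists>B. sb_iso A B \<and> superbialg3 B \<and> un B 0 = 1 \<and> un B 1 = 0"
proof -
  have u2: "un A 2 = 0" by (rule sb_un2[OF SA])
  have nz: "un A 0 \<noteq> 0 \<or> un A 1 \<noteq> 0" using sb_eun[OF SA] u2 by (auto simp: sum3)
  obtain P Q where PQ: "evenM P" "inv3 P Q"
    and uP: "un A 0 * P 0 0 + un A 1 * P 1 0 = 1" "un A 0 * P 0 1 + un A 1 * P 1 1 = 0"
  proof (cases "un A 0 = 0")
    case True
    then have h: "un A 1 \<noteq> 0" using nz by simp
    show ?thesis
      apply (rule that[of "mat3 0 1 (1/un A 1) 0 1" "mat3 0 (un A 1) 1 0 1"])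
      using True h by (simp_all add: mat3_even mat3_inv)
  next
    case False
    show ?thesis
      apply (rule that[of "mat3 (1/un A 0) (- un A 1/un A 0) 0 1 1" "mat3 (un A 0) (un A 1) 0 1 1"])
      using False by (simp_all add: mat3_even mat3_inv field_simps)
  qed
  let ?B = "transp A P Q"
  have iso: "sb_iso A ?B" by (rule transp_sb[OF PQ])
  have S: "superbialg3 ?B" by (rule sb_iso_super[OF iso SA])
  have z: "P 2 0 = 0" "P 2 1 = 0" using evenM_z[OF PQ(1)] by auto
  have "un ?B 0 = 1" "un ?B 1 = 0" using uP z u2 by (simp_all add: transp_def sum3)
  then show ?thesis using iso S by blast
qed

definition shear :: "'a::field sbd \<Rightarrow> 'a \<Rightarrow> 'a \<Rightarrow> 'a \<Rightarrow> 'a sbd" where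
  "shear B s0 t0 r = transp B (mat3 1 0 (-s0/t0) (1/t0) (1/r)) (mat3 1 0 s0 t0 r)"

lemma shear_iso:
  assumes S: "superbialg3 (B::'a::field sbd)" and t0: "t0 \<noteq> 0" and r: "r \<noteq> 0"
  shows "sb_iso B (shear B s0 t0 r)" "superbialg3 (shear B s0 t0 r)"
proof -
  have "inv3 (mat3 1 0 (-s0/t0) (1/t0) (1/r)) (mat3 1 0 s0 t0 r)"
    using t0 r by (simp add: mat3_inv field_simps)
  then show "sb_iso B (shear B s0 t0 r)" unfolding shear_def by (rule transp_sb[OF mat3_even])
  then show "superbialg3 (shear B s0 t0 r)" using S by (rule sb_iso_super)
qed

lemma shear_vals:
  assumes S: "superbialg3 (B::'a::field sbd)" and u: "un B 0 = 1" "un B 1 = 0" and t0: "t0 \<noteq> 0" and r: "r \<noteq> 0"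
  shows "un (shear B s0 t0 r) 0 = 1" "un (shear B s0 t0 r) 1 = 0"
    "mu (shear B s0 t0 r) 1 1 0 = t0^2 * mu B 1 1 0 - s0^2 - s0 * t0 * mu B 1 1 1"
    "mu (shear B s0 t0 r) 1 1 1 = 2 * s0 + t0 * mu B 1 1 1"
    "mu (shear B s0 t0 r) 1 2 2 = s0 + t0 * mu B 1 2 2"
    "mu (shear B s0 t0 r) 2 1 2 = s0 + t0 * mu B 2 1 2"
    "mu (shear B s0 t0 r) 2 2 0 = r^2 * (mu B 2 2 0 - mu B 2 2 1 * s0 / t0)"
    "mu (shear B s0 t0 r) 2 2 1 = r^2 * mu B 2 2 1 / t0"
    "cu (shear B s0 t0 r) 1 = s0 + t0 * cu B 1"
  using u t0 r unit_facts[OF S u] gz[OF S]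
  by (simp_all add: shear_def transp_def sum3 field_simps power2_eq_square)

lemma stage2:
  assumes S: "superbialg3 (B::'a::field_char_0 sbd)" and u: "un B 0 = 1" "un B 1 = 0"
    and ac: "\<forall>p :: 'a poly. degree p > 0 \<longrightarrow> (\<exists>z. poly p z = 0)"
  shows "\<exists>C. sb_iso B C \<and> superbialg3 C \<and> un C 0 = 1 \<and> un C 1 = 0 \<and> mu C 1 1 0 = 0 \<and> (mu C 1 1 1 = 1 \<or> mu C 1 1 1 = 0)"
proof (cases "(mu B 1 1 1)^2 + 4 * mu B 1 1 0 = 0")
  case True
  let ?C = "shear B (- mu B 1 1 1 / 2) 1 1"
  have e0: "mu ?C 1 1 0 = 1^2 * mu B 1 1 0 - (- mu B 1 1 1 / 2)^2 - (- mu B 1 1 1 / 2) * 1 * mu B 1 1 1"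
    using shear_vals(3)[OF S u, of 1 1 "- mu B 1 1 1 / 2"] by simp
  have "1^2 * mu B 1 1 0 - (- mu B 1 1 1 / 2)^2 - (- mu B 1 1 1 / 2) * 1 * mu B 1 1 1 = ((mu B 1 1 1)^2 + 4 * mu B 1 1 0) / 4"
    by (simp add: field_simps power2_eq_square)
  then have v0: "mu ?C 1 1 0 = 0" using e0 True by simp
  have v1: "mu ?C 1 1 1 = 0"
    using shear_vals(4)[OF S u, of 1 1 "- mu B 1 1 1 / 2"] by simp
  note v = v0 v1
  show ?thesis using shear_iso[OF S, of 1 1 "- mu B 1 1 1 / 2"] shear_vals[OF S u, of 1 1 "- mu B 1 1 1 / 2"] v
    by auto
next
  case False
  let ?al = "mu B 1 1 0" and ?be = "mu B 1 1 1"
  obtain d where d: "d * d = ?be^2 + 4 * ?al" using sqrt_ex[OF ac] by blast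
  then have d0: "d \<noteq> 0" using False by auto
  let ?s0 = "(1 - ?be / d) / 2" and ?t0 = "1 / d"
  let ?C = "shear B ?s0 ?t0 1"
  have t0: "?t0 \<noteq> 0" using d0 by simp
  have v1: "mu ?C 1 1 1 = 1"
    using shear_vals[OF S u t0, of 1 ?s0] d0 by (simp add: field_simps)
  have e0: "mu ?C 1 1 0 = ?t0^2 * ?al - ?s0^2 - ?s0 * ?t0 * ?be"
    using shear_vals(3)[OF S u t0, of 1 ?s0] by simp
  have "?t0^2 * ?al - ?s0^2 - ?s0 * ?t0 * ?be = (4 * ?al + ?be^2 - d * d) / (4 * d * d)"
    using d0 by (simp add: field_simps power2_eq_square)
  then have "mu ?C 1 1 0 = (4 * ?al + ?be^2 - d * d) / (4 * d * d)" using e0 by simp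
  also have "\<dots> = 0" using d by simp
  finally have v0: "mu ?C 1 1 0 = 0" .
  show ?thesis using shear_iso[OF S t0, of 1] shear_vals[OF S u t0, of 1 ?s0] v0 v1
    by auto
qed

lemma nil_contra:
  assumes S: "superbialg3 (C::'a::field_char_0 sbd)" and u: "un C 0 = 1" "un C 1 = 0"
    and n: "mu C 1 1 0 = 0" "mu C 1 1 1 = 0"
  shows False
proof -
  note F = unit_facts[OF S u] gz[OF S] n
  let ?a = "mu C 1 2 2" and ?b = "mu C 2 1 2" and ?s = "mu C 2 2 0" and ?t = "mu C 2 2 1"
  have "?a * ?a = 0" using sb_assoc[OF S, of 1 1 2 2] F by (simp add: sum3)
  then have a: "?a = 0" by simp
  have "?b * ?b = 0" using sb_assoc[OF S, of 2 1 1 2] F by (simp add: sum3)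
  then have b: "?b = 0" by simp
  have s: "?s = 0" using sb_assoc[OF S, of 1 2 2 1] F a by (simp add: sum3)
  have "cu C 1 * cu C 1 = 0" using sb_emul[OF S, of 1 1] F by (simp add: sum3)
  then have e: "cu C 1 = 0" by simp
  have c1: "co C 1 0 0 = 0" "co C 1 0 1 = 1" using sb_cul[OF S, of 1 0] sb_cul[OF S, of 1 1] F e by (simp_all add: sum3 kd_def)
  have c2: "co C 1 1 0 = 1" using sb_cur[OF S, of 1 1] F e by (simp add: sum3 kd_def)
  have c3: "co C 2 0 2 = 1" "co C 2 2 0 = 1" using sb_cul[OF S, of 2 2] sb_cur[OF S, of 2 2] F e by (simp_all add: sum3 kd_def)
  note G = F a b s e c1 c2 c3
  have d1: "(\<Sum>k<3. mu C 1 1 k * co C k 1 1) = (\<Sum>i<3. \<Sum>j<3. \<Sum>l<3. \<Sum>m<3. co C 1 i j * co C 1 l m * ksign j l * mu C i l 1 * mu C j m 1)"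
    by (rule sb_dmul[OF S]) simp_all
  have l1: "(\<Sum>k<3. mu C 1 1 k * co C k 1 1) = 0" using G by (simp add: sum3)
  have r1: "(\<Sum>i<3. \<Sum>j<3. \<Sum>l<3. \<Sum>m<3. co C 1 i j * co C 1 l m * ksign j l * mu C i l 1 * mu C j m 1) = 2 - (co C 1 2 2 * ?t) * (co C 1 2 2 * ?t)"
    using G by (simp add: sum3 ksign_def algebra_simps)
  have d2: "(\<Sum>k<3. mu C 2 2 k * co C k 2 2) = (\<Sum>i<3. \<Sum>j<3. \<Sum>l<3. \<Sum>m<3. co C 2 i j * co C 2 l m * ksign j l * mu C i l 2 * mu C j m 2)"
    by (rule sb_dmul[OF S]) simp_all
  have l2: "(\<Sum>k<3. mu C 2 2 k * co C k 2 2) = co C 1 2 2 * ?t" using G by (simp add: sum3)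
  have r2: "(\<Sum>i<3. \<Sum>j<3. \<Sum>l<3. \<Sum>m<3. co C 2 i j * co C 2 l m * ksign j l * mu C i l 2 * mu C j m 2) = 0"
    using G by (simp add: sum3 ksign_def algebra_simps)
  have z: "co C 1 2 2 * ?t = 0" using d2 l2 r2 by simp
  have "(2::'a) = (co C 1 2 2 * ?t) * (co C 1 2 2 * ?t)" using d1 l1 r1 by simp
  also have "\<dots> = 0" by (simp only: z mult_zero_left)
  finally show False by simp
qed

definition isalg :: "'a sbd \<Rightarrow> (nat \<Rightarrow> nat \<Rightarrow> nat \<Rightarrow> 'a) \<Rightarrow> bool" where
  "isalg D M \<longleftrightarrow> (\<forall>i<3. \<forall>j<3. \<forall>k<3. mu D i j k = M i j k)"

lemma sb_iso_refl: "sb_iso (A::'a::field sbd) A"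
  by (rule id_iso) simp_all

lemma idem_facts:
  assumes S: "superbialg3 (C::'a::field sbd)" and u: "un C 0 = 1" "un C 1 = 0"
    and n: "mu C 1 1 0 = 0" "mu C 1 1 1 = 1"
  shows "mu C 1 2 2 * mu C 1 2 2 = mu C 1 2 2" "mu C 2 1 2 * mu C 2 1 2 = mu C 2 1 2"
    "mu C 1 2 2 * mu C 2 2 0 = 0" "mu C 1 2 2 * mu C 2 2 1 = mu C 2 2 0 + mu C 2 2 1"
    "mu C 2 1 2 * mu C 2 2 0 = 0" "mu C 2 1 2 * mu C 2 2 1 = mu C 2 2 0 + mu C 2 2 1"
    "mu C 2 2 1 * mu C 1 2 2 = mu C 2 2 1 * mu C 2 1 2"
proof -
  note F = unit_facts[OF S u] gz[OF S] n
  show "mu C 1 2 2 * mu C 1 2 2 = mu C 1 2 2" using sb_assoc[OF S, of 1 1 2 2] F by (simp add: sum3)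
  show "mu C 2 1 2 * mu C 2 1 2 = mu C 2 1 2" using sb_assoc[OF S, of 2 1 1 2] F by (simp add: sum3)
  show "mu C 1 2 2 * mu C 2 2 0 = 0" using sb_assoc[OF S, of 1 2 2 0] F by (simp add: sum3)
  show "mu C 1 2 2 * mu C 2 2 1 = mu C 2 2 0 + mu C 2 2 1" using sb_assoc[OF S, of 1 2 2 1] F by (simp add: sum3)
  show "mu C 2 1 2 * mu C 2 2 0 = 0" using sb_assoc[OF S, of 2 2 1 0] F by (simp add: sum3)
  show "mu C 2 1 2 * mu C 2 2 1 = mu C 2 2 0 + mu C 2 2 1" using sb_assoc[OF S, of 2 2 1 1] F by (simp add: sum3)
  show "mu C 2 2 1 * mu C 1 2 2 = mu C 2 2 1 * mu C 2 1 2" using sb_assoc[OF S, of 2 2 2 2] F by (simp add: sum3)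
qed

lemma stage3a:
  assumes S: "superbialg3 (C::'a::field_char_0 sbd)" and u: "un C 0 = 1" "un C 1 = 0"
    and n: "mu C 1 1 0 = 0" "mu C 1 1 1 = 1" and a: "mu C 1 2 2 = 1"
    and ac: "\<forall>p :: 'a poly. degree p > 0 \<longrightarrow> (\<exists>z. poly p z = 0)"
  shows "\<exists>D. sb_iso C D \<and> superbialg3 D \<and> un D 0 = 1 \<and> un D 1 = 0 \<and> (isalg D mul21 \<or> isalg D mul22 \<or> isalg D mul23)"
proof -
  note I = idem_facts[OF S u n]
  note F = unit_facts[OF S u] gz[OF S] n a
  have s: "mu C 2 2 0 = 0" using I(3) a by simp
  have b: "mu C 2 1 2 = 0 \<or> mu C 2 1 2 = 1" using I(2) by (metis mult_cancel_right2 mult_eq_0_iff)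
  show ?thesis
  proof (cases "mu C 2 1 2 = 0")
    case True
    have t: "mu C 2 2 1 = 0" using I(7) a True by simp
    have "isalg C mul22" unfolding isalg_def all3 using F s t True by (simp add: mul22_def bv_def)
    then show ?thesis using sb_iso_refl[of C] S u by blast
  next
    case False
    then have b1: "mu C 2 1 2 = 1" using b by simp
    show ?thesis
    proof (cases "mu C 2 2 1 = 0")
      case True
      have "isalg C mul23" unfolding isalg_def all3 using F s True b1 by (simp add: mul23_def bv_def)
      then show ?thesis using sb_iso_refl[of C] S u by blast
    next
      case False
      obtain r where r: "r * r = 1 / mu C 2 2 1" using sqrt_ex[OF ac] by blast
      then have r0: "r \<noteq> 0" using False by auto
      let ?D = "shear C 0 1 r"
      have SD: "superbialg3 ?D" "sb_iso C ?D" using shear_iso[OF S _ r0, of 1 0] by simp_all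
      have V: "un ?D 0 = 1" "un ?D 1 = 0" "mu ?D 1 1 0 = 0" "mu ?D 1 1 1 = 1" "mu ?D 1 2 2 = 1" "mu ?D 2 1 2 = 1"
        "mu ?D 2 2 0 = 0" "mu ?D 2 2 1 = 1"
        using shear_vals[OF S u _ r0, of 1 0] n a b1 s r False by (simp_all add: power2_eq_square)
      have "isalg ?D mul21" unfolding isalg_def all3 using unit_facts[OF SD(1) V(1,2)] gz[OF SD(1)] V
        by (simp add: mul21_def bv_def)
      then show ?thesis using SD V by blast
    qed
  qed
qed

lemma stage3:
  assumes S: "superbialg3 (C::'a::field_char_0 sbd)" and u: "un C 0 = 1" "un C 1 = 0"
    and n: "mu C 1 1 0 = 0" "mu C 1 1 1 = 1"
    and ac: "\<forall>p :: 'a poly. degree p > 0 \<longrightarrow> (\<exists>z. poly p z = 0)"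
  shows "\<exists>D. sb_iso C D \<and> superbialg3 D \<and> un D 0 = 1 \<and> un D 1 = 0 \<and> (isalg D mul21 \<or> isalg D mul22 \<or> isalg D mul23)"
proof (cases "mu C 1 2 2 = 1")
  case True
  then show ?thesis using stage3a[OF S u n True ac] by blast
next
  case False
  then have a0: "mu C 1 2 2 = 0" using idem_facts(1)[OF S u n] by (metis mult_cancel_right2 mult_eq_0_iff)
  let ?D = "shear C 1 (-1) 1"
  have SD: "superbialg3 ?D" "sb_iso C ?D" using shear_iso[OF S, of "-1" 1 1] by simp_all
  have V: "un ?D 0 = 1" "un ?D 1 = 0" "mu ?D 1 1 0 = 0" "mu ?D 1 1 1 = 1" "mu ?D 1 2 2 = 1"
    using shear_vals[OF S u, of "-1" 1 1] n a0 by simp_all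
  obtain E where "sb_iso ?D E \<and> superbialg3 E \<and> un E 0 = 1 \<and> un E 1 = 0 \<and> (isalg E mul21 \<or> isalg E mul22 \<or> isalg E mul23)"
    using stage3a[OF SD(1) V(1,2) V(3,4) V(5) ac] by blast
  then show ?thesis using sb_iso_trans[OF SD(2)] by blast
qed

lemma fac2: "(x + a) * (x + b) = 0 \<Longrightarrow> x = -a \<or> x = -(b::'a::field)"
  by (simp add: eq_neg_iff_add_eq_0)
lemma fac1: "x * (x + a) = 0 \<Longrightarrow> x = 0 \<or> x = -(a::'a::field)"
  by (simp add: eq_neg_iff_add_eq_0)

lemma isalgD: "isalg D M \<Longrightarrow> i<3 \<Longrightarrow> j<3 \<Longrightarrow> k<3 \<Longrightarrow> mu D i j k = M i j k"
  by (simp add: isalg_def)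

lemma coop_mk: "coop (mk M dx dy ex) = mk M (\<lambda>p q. ksign q p * dx q p) (\<lambda>p q. ksign q p * dy q p) (ex::'a::field)"
  by (auto simp: coop_def mk_def fun_eq_iff tb_def ksign_def)

lemma to_mk:
  assumes S: "superbialg3 (D::'a::field sbd)" and u: "un D 0 = 1" "un D 1 = 0" and H: "isalg D M"
    and e: "cu D 1 = ex" and c1: "\<forall>p<3. \<forall>q<3. co D 1 p q = dx p q" and c2: "\<forall>p<3. \<forall>q<3. co D 2 p q = dy p q"
  shows "sb_iso D (mk M dx dy ex)"
proof (rule id_iso)
  note F = unit_facts[OF S u] gz[OF S]
  show "\<forall>i<3. \<forall>j<3. \<forall>k<3. mu D i j k = mu (mk M dx dy ex) i j k" using H by (simp add: isalg_def mk_def)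
  show "\<forall>k<3. un D k = un (mk M dx dy ex) k" unfolding all3 using u F by (simp add: mk_def bv_def)
  show "\<forall>k<3. \<forall>i<3. \<forall>j<3. co D k i j = co (mk M dx dy ex) k i j"
  proof (intro allI impI)
    fix k i j :: nat assume h: "k<3" "i<3" "j<3"
    show "co D k i j = co (mk M dx dy ex) k i j"
      using less3[OF h(1)] less3[OF h(2)] less3[OF h(3)] c1 c2 h F by (auto simp: mk_def tb_def)
  qed
  show "\<forall>k<3. cu D k = cu (mk M dx dy ex) k" unfolding all3 using e F by (simp add: mk_def)
qed

lemma stage4_21:
  assumes S: "superbialg3 (D::'a::field_char_0 sbd)" and u: "un D 0 = 1" "un D 1 = 0" and H: "isalg D mul21"
  shows "\<exists>n\<in>{1..11}. sb_iso D (model n)"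
proof -
  note V0 = unit_facts[OF S u] gz[OF S] isalgD[OF H] mul21_def bv_def
  have e: "cu D 1 = 0" using sb_emul[OF S, of 2 2] by (simp add: sum3 V0)
  have c: "co D 1 0 0 = 0" "co D 1 0 1 = 1" "co D 1 1 0 = 1" "co D 2 0 2 = 1" "co D 2 2 0 = 1"
    using sb_cul[OF S, of 1 0] sb_cul[OF S, of 1 1] sb_cur[OF S, of 1 1] sb_cul[OF S, of 2 2] sb_cur[OF S, of 2 2]
    by (simp_all add: sum3 V0 e kd_def)
  define c11 where "c11 = co D 1 1 1"
  define c22 where "c22 = co D 1 2 2"
  define d12 where "d12 = co D 2 1 2"
  define d21 where "d21 = co D 2 2 1"
  note V = V0 e c c11_def[symmetric] c22_def[symmetric] d12_def[symmetric] d21_def[symmetric]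
  have i8: "(c22) = 0"
  proof -
    have i: "(\<Sum>k<3. mu D 2 2 k * co D k 2 2) = (\<Sum>i<3. \<Sum>j<3. \<Sum>l<3. \<Sum>m<3. co D 2 i j * co D 2 l m * ksign j l * mu D i l 2 * mu D j m 2)" by (rule sb_dmul[OF S]) simp_all
    have l: "(\<Sum>k<3. mu D 2 2 k * co D k 2 2) = (c22)" by (simp add: sum3 V, (algebra)?)
    have r: "(\<Sum>i<3. \<Sum>j<3. \<Sum>l<3. \<Sum>m<3. co D 2 i j * co D 2 l m * ksign j l * mu D i l 2 * mu D j m 2) = 0" by (simp add: sum3 ksign_def V, (algebra)?)
    show ?thesis using i l r by simp
  qed
  have i1: "(c11) = (2 + 4 * c11 + c11 * c11 - c22 * c22)"
  proof -
    have i: "(\<Sum>k<3. mu D 1 1 k * co D k 1 1) = (\<Sum>i<3. \<Sum>j<3. \<Sum>l<3. \<Sum>m<3. co D 1 i j * co D 1 l m * ksign j l * mu D i l 1 * mu D j m 1)" by (rule sb_dmul[OF S]) simp_all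
    have l: "(\<Sum>k<3. mu D 1 1 k * co D k 1 1) = (c11)" by (simp add: sum3 V, (algebra)?)
    have r: "(\<Sum>i<3. \<Sum>j<3. \<Sum>l<3. \<Sum>m<3. co D 1 i j * co D 1 l m * ksign j l * mu D i l 1 * mu D j m 1) = (2 + 4 * c11 + c11 * c11 - c22 * c22)" by (simp add: sum3 ksign_def V, (algebra)?)
    show ?thesis using i l r by simp
  qed
  have i3: "(d12) = (1 + c11 + c11 * d12 - c22 - c22 * d21 + 2 * d12)"
  proof -
    have i: "(\<Sum>k<3. mu D 1 2 k * co D k 1 2) = (\<Sum>i<3. \<Sum>j<3. \<Sum>l<3. \<Sum>m<3. co D 1 i j * co D 2 l m * ksign j l * mu D i l 1 * mu D j m 2)" by (rule sb_dmul[OF S]) simp_all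
    have l: "(\<Sum>k<3. mu D 1 2 k * co D k 1 2) = (d12)" by (simp add: sum3 V, (algebra)?)
    have r: "(\<Sum>i<3. \<Sum>j<3. \<Sum>l<3. \<Sum>m<3. co D 1 i j * co D 2 l m * ksign j l * mu D i l 1 * mu D j m 2) = (1 + c11 + c11 * d12 - c22 - c22 * d21 + 2 * d12)" by (simp add: sum3 ksign_def V, (algebra)?)
    show ?thesis using i l r by simp
  qed
  have i4: "(d21) = (1 + c11 + c11 * d21 + c22 + c22 * d12 + 2 * d21)"
  proof -
    have i: "(\<Sum>k<3. mu D 1 2 k * co D k 2 1) = (\<Sum>i<3. \<Sum>j<3. \<Sum>l<3. \<Sum>m<3. co D 1 i j * co D 2 l m * ksign j l * mu D i l 2 * mu D j m 1)" by (rule sb_dmul[OF S]) simp_all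
    have l: "(\<Sum>k<3. mu D 1 2 k * co D k 2 1) = (d21)" by (simp add: sum3 V, (algebra)?)
    have r: "(\<Sum>i<3. \<Sum>j<3. \<Sum>l<3. \<Sum>m<3. co D 1 i j * co D 2 l m * ksign j l * mu D i l 2 * mu D j m 1) = (1 + c11 + c11 * d21 + c22 + c22 * d12 + 2 * d21)" by (simp add: sum3 ksign_def V, (algebra)?)
    show ?thesis using i l r by simp
  qed
  have i7: "(c11) = (2 * d12 + d12 * d12 + 2 * d21 + d21 * d21)"
  proof -
    have i: "(\<Sum>k<3. mu D 2 2 k * co D k 1 1) = (\<Sum>i<3. \<Sum>j<3. \<Sum>l<3. \<Sum>m<3. co D 2 i j * co D 2 l m * ksign j l * mu D i l 1 * mu D j m 1)" by (rule sb_dmul[OF S]) simp_all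
    have l: "(\<Sum>k<3. mu D 2 2 k * co D k 1 1) = (c11)" by (simp add: sum3 V, (algebra)?)
    have r: "(\<Sum>i<3. \<Sum>j<3. \<Sum>l<3. \<Sum>m<3. co D 2 i j * co D 2 l m * ksign j l * mu D i l 1 * mu D j m 1) = (2 * d12 + d12 * d12 + 2 * d21 + d21 * d21)" by (simp add: sum3 ksign_def V, (algebra)?)
    show ?thesis using i l r by simp
  qed
  have k1: "(c11 * d12) = (d12 * d12)"
  proof -
    have i: "(\<Sum>i<3. co D 2 i 2 * co D i 1 1) = (\<Sum>j<3. co D 2 1 j * co D j 1 2)" by (rule sb_coass[OF S]) simp_all
    have l: "(\<Sum>i<3. co D 2 i 2 * co D i 1 1) = (c11 * d12)" by (simp add: sum3 V, (algebra)?)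
    have r: "(\<Sum>j<3. co D 2 1 j * co D j 1 2) = (d12 * d12)" by (simp add: sum3 ksign_def V, (algebra)?)
    show ?thesis using i l r by simp
  qed
  have k2: "(d21 * d21) = (c11 * d21)"
  proof -
    have i: "(\<Sum>i<3. co D 2 i 1 * co D i 2 1) = (\<Sum>j<3. co D 2 2 j * co D j 1 1)" by (rule sb_coass[OF S]) simp_all
    have l: "(\<Sum>i<3. co D 2 i 1 * co D i 2 1) = (d21 * d21)" by (simp add: sum3 V, (algebra)?)
    have r: "(\<Sum>j<3. co D 2 2 j * co D j 1 1) = (c11 * d21)" by (simp add: sum3 ksign_def V, (algebra)?)
    show ?thesis using i l r by simp
  qed

  have z22: "c22 = 0" using i8 by simp
  have "(c11 + 1) * (c11 + 2) = 0" using i1 z22 by (simp add: algebra_simps)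
  then have c11v: "c11 = -1 \<or> c11 = -2" by (rule fac2)
  have g3: "(1 + c11) * (1 + d12) = 0" using i3 z22 by (simp add: algebra_simps)
  have g4: "(1 + c11) * (1 + d21) = 0" using i4 z22 by (simp add: algebra_simps)
  have c11m: "c11 = -1"
  proof (rule ccontr)
    assume "c11 \<noteq> -1"
    then have "c11 = -2" using c11v by simp
    moreover have "d12 = -1" using g3 \<open>c11 \<noteq> -1\<close> by (auto simp: add_eq_0_iff)
    ultimately show False using k1 by simp
  qed
  have "d12 * (d12 + 1) = 0" using k1 c11m by algebra
  then have d12v: "d12 = 0 \<or> d12 = -1" by (rule fac1)
  have "d21 * (d21 + 1) = 0" using k2 c11m by algebra
  then have d21v: "d21 = 0 \<or> d21 = -1" by (rule fac1)
  have i7': "- 1 = 2 * d12 + d12 * d12 + 2 * d21 + d21 * d21" using i7 c11m by algebra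
  have cases: "(d12 = 0 \<and> d21 = -1) \<or> (d12 = -1 \<and> d21 = 0)"
    using d12v d21v i7' by (elim disjE) simp_all
  note W = V z22 c11m
  show ?thesis
  proof (cases "d12 = 0")
    case True
    then have d: "d21 = -1" using cases by simp
    have "sb_iso D (model 1)" unfolding model_def
      by (simp, rule to_mk[OF S u H]) (simp_all add: all3 W True d dx0_def tb_def)
    then show ?thesis by force
  next
    case False
    then have d: "d12 = -1" "d21 = 0" using cases by simp_all
    have "sb_iso D (model 2)" unfolding model_def
      by (simp add: coop_mk, rule to_mk[OF S u H]) (simp_all add: all3 W d dx0_def tb_def ksign_def)
    then show ?thesis by force
  qed
qed

lemma scale_iso:
  assumes S: "superbialg3 (D::'a::field sbd)" and u: "un D 0 = 1" "un D 1 = 0" and r: "r \<noteq> 0"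
  shows "sb_iso D (shear D 0 1 r)" "superbialg3 (shear D 0 1 r)" "un (shear D 0 1 r) 0 = 1" "un (shear D 0 1 r) 1 = 0"
    "cu (shear D 0 1 r) 1 = cu D 1"
  using shear_iso[OF S _ r, of 1 0] shear_vals[OF S u _ r, of 1 0] by simp_all

lemma scale_co:
  assumes S: "superbialg3 (D::'a::field sbd)" and u: "un D 0 = 1" "un D 1 = 0" and r: "r \<noteq> 0"
  shows "co (shear D 0 1 r) 1 0 0 = co D 1 0 0" "co (shear D 0 1 r) 1 0 1 = co D 1 0 1"
    "co (shear D 0 1 r) 1 1 0 = co D 1 1 0" "co (shear D 0 1 r) 1 1 1 = co D 1 1 1"
    "co (shear D 0 1 r) 1 2 2 = co D 1 2 2 / (r * r)"
    "co (shear D 0 1 r) 2 0 2 = co D 2 0 2" "co (shear D 0 1 r) 2 2 0 = co D 2 2 0"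
    "co (shear D 0 1 r) 2 1 2 = co D 2 1 2" "co (shear D 0 1 r) 2 2 1 = co D 2 2 1"
  using r gz[OF S] by (simp_all add: shear_def transp_def sum3 field_simps)

lemma scale_mu:
  assumes S: "superbialg3 (D::'a::field sbd)" and u: "un D 0 = 1" "un D 1 = 0" and r: "r \<noteq> 0"
    and H: "isalg D M" and M: "M 2 2 0 = 0" "M 2 2 1 = 0" "M 1 1 0 = 0" "M 1 1 1 = 1"
  shows "isalg (shear D 0 1 r) M"
proof -
  have SE: "superbialg3 (shear D 0 1 r)" and uE: "un (shear D 0 1 r) 0 = 1" "un (shear D 0 1 r) 1 = 0"
    using scale_iso[OF S u r] by simp_all
  have vD: "mu D 2 2 0 = 0" "mu D 2 2 1 = 0" "mu D 1 1 0 = 0" "mu D 1 1 1 = 1"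
    using isalgD[OF H, of 2 2 0] isalgD[OF H, of 2 2 1] isalgD[OF H, of 1 1 0] isalgD[OF H, of 1 1 1] M by simp_all
  have v: "mu (shear D 0 1 r) 1 1 0 = mu D 1 1 0" "mu (shear D 0 1 r) 1 1 1 = mu D 1 1 1"
    "mu (shear D 0 1 r) 1 2 2 = mu D 1 2 2" "mu (shear D 0 1 r) 2 1 2 = mu D 2 1 2"
    "mu (shear D 0 1 r) 2 2 0 = mu D 2 2 0" "mu (shear D 0 1 r) 2 2 1 = mu D 2 2 1"
    using shear_vals[OF S u _ r, of 1 0] vD by simp_all
  show ?thesis unfolding isalg_def all3
    using unit_facts[OF SE uE] gz[OF SE] v unit_facts[OF S u] gz[OF S] isalgD[OF H] by simp
qed

lemma stage4_22:
  assumes S: "superbialg3 (D::'a::field_char_0 sbd)" and u: "un D 0 = 1" "un D 1 = 0" and H: "isalg D mul22"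
    and ac: "\<forall>p :: 'a poly. degree p > 0 \<longrightarrow> (\<exists>z. poly p z = 0)"
  shows "\<exists>n\<in>{1..11}. sb_iso D (model n)"
proof -
  note V0 = unit_facts[OF S u] gz[OF S] isalgD[OF H] mul22_def bv_def
  have "cu D 1 * cu D 1 = cu D 1" using sb_emul[OF S, of 1 1] by (simp add: sum3 V0)
  then have ev: "cu D 1 = 0 \<or> cu D 1 = 1" by (metis mult_cancel_right2 mult_eq_0_iff)
  define c00 where "c00 = co D 1 0 0"
  define c01 where "c01 = co D 1 0 1"
  define c10 where "c10 = co D 1 1 0"
  define c11 where "c11 = co D 1 1 1"
  define c22 where "c22 = co D 1 2 2"
  define d02 where "d02 = co D 2 0 2"
  define d20 where "d20 = co D 2 2 0"
  define d12 where "d12 = co D 2 1 2"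
  define d21 where "d21 = co D 2 2 1"
  note N = c00_def[symmetric] c01_def[symmetric] c10_def[symmetric] c11_def[symmetric] c22_def[symmetric]
    d02_def[symmetric] d20_def[symmetric] d12_def[symmetric] d21_def[symmetric]
  have cr: "c00 + cu D 1 * c10 = 0" "c01 + cu D 1 * c11 = 1" "c00 + cu D 1 * c01 = 0" "c10 + cu D 1 * c11 = 1"
    "d02 + cu D 1 * d12 = 1" "d20 + cu D 1 * d21 = 1"
    using sb_cul[OF S, of 1 0] sb_cul[OF S, of 1 1] sb_cur[OF S, of 1 0] sb_cur[OF S, of 1 1] sb_cul[OF S, of 2 2] sb_cur[OF S, of 2 2]
    by (simp_all add: sum3 V0 N kd_def mult.commute)

  show ?thesis
  proof (cases "cu D 1 = 0")
    case True
    note e = True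
    have c: "c00 = 0" "c01 = 1" "c10 = 1" "d02 = 1" "d20 = 1" using cr e by simp_all
    note V = V0 e N c
  have i1: "0 = (1 + d12)"
  proof -
    have i: "(\<Sum>k<3. mu D 2 1 k * co D k 1 2) = (\<Sum>i<3. \<Sum>j<3. \<Sum>l<3. \<Sum>m<3. co D 2 i j * co D 1 l m * ksign j l * mu D i l 1 * mu D j m 2)" by (rule sb_dmul[OF S]) simp_all
    have l: "(\<Sum>k<3. mu D 2 1 k * co D k 1 2) = 0" by (simp add: sum3 V, (algebra)?)
    have r: "(\<Sum>i<3. \<Sum>j<3. \<Sum>l<3. \<Sum>m<3. co D 2 i j * co D 1 l m * ksign j l * mu D i l 1 * mu D j m 2) = (1 + d12)" by (simp add: sum3 ksign_def V, (algebra)?)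
    show ?thesis using i l r by simp
  qed
  have i2: "0 = (1 + d21)"
  proof -
    have i: "(\<Sum>k<3. mu D 2 1 k * co D k 2 1) = (\<Sum>i<3. \<Sum>j<3. \<Sum>l<3. \<Sum>m<3. co D 2 i j * co D 1 l m * ksign j l * mu D i l 2 * mu D j m 1)" by (rule sb_dmul[OF S]) simp_all
    have l: "(\<Sum>k<3. mu D 2 1 k * co D k 2 1) = 0" by (simp add: sum3 V, (algebra)?)
    have r: "(\<Sum>i<3. \<Sum>j<3. \<Sum>l<3. \<Sum>m<3. co D 2 i j * co D 1 l m * ksign j l * mu D i l 2 * mu D j m 1) = (1 + d21)" by (simp add: sum3 ksign_def V, (algebra)?)
    show ?thesis using i l r by simp
  qed
  have k1: "(c11 * d12) = (d12 * d12)"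
  proof -
    have i: "(\<Sum>i<3. co D 2 i 2 * co D i 1 1) = (\<Sum>j<3. co D 2 1 j * co D j 1 2)" by (rule sb_coass[OF S]) simp_all
    have l: "(\<Sum>i<3. co D 2 i 2 * co D i 1 1) = (c11 * d12)" by (simp add: sum3 V, (algebra)?)
    have r: "(\<Sum>j<3. co D 2 1 j * co D j 1 2) = (d12 * d12)" by (simp add: sum3 ksign_def V, (algebra)?)
    show ?thesis using i l r by simp
  qed

    have d: "d12 = -1" "d21 = -1" using i1 i2 by (simp_all add: eq_neg_iff_add_eq_0 add.commute)
    have c11m: "c11 = -1" using k1 d by algebra
    note W = V d c11m
    show ?thesis
    proof (cases "c22 = 0")
      case True
      have "sb_iso D (model 3)" unfolding model_def
        by (simp, rule to_mk[OF S u H]) (simp_all add: all3 W True dx0_def tb_def)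
      then show ?thesis by force
    next
      case False
      obtain r where rr: "r * r = c22" using sqrt_ex[OF ac] by blast
      then have r0: "r \<noteq> 0" using False by auto
      let ?E = "shear D 0 1 r"
      note SE = scale_iso[OF S u r0]
      have HE: "isalg ?E mul22" by (rule scale_mu[OF S u r0 H]) (simp_all add: mul22_def bv_def)
      note CE = scale_co[OF S u r0]
      have "sb_iso ?E (model 4)" unfolding model_def
        by (simp, rule to_mk[OF SE(2) SE(3) SE(4) HE]) (simp_all add: all3 W CE SE(5) gz[OF SE(2)] dx0_def tb_def rr[symmetric] r0)
      then show ?thesis using sb_iso_trans[OF SE(1)] by force
    qed
  next
    case False
    then have e: "cu D 1 = 1" using ev by simp
    note V = V0 e N
  have j1: "(c00) = (c00 * c00)"
  proof -
    have i: "(\<Sum>k<3. mu D 1 1 k * co D k 0 0) = (\<Sum>i<3. \<Sum>j<3. \<Sum>l<3. \<Sum>m<3. co D 1 i j * co D 1 l m * ksign j l * mu D i l 0 * mu D j m 0)" by (rule sb_dmul[OF S]) simp_all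
    have l: "(\<Sum>k<3. mu D 1 1 k * co D k 0 0) = (c00)" by (simp add: sum3 V, (algebra)?)
    have r: "(\<Sum>i<3. \<Sum>j<3. \<Sum>l<3. \<Sum>m<3. co D 1 i j * co D 1 l m * ksign j l * mu D i l 0 * mu D j m 0) = (c00 * c00)" by (simp add: sum3 ksign_def V, (algebra)?)
    show ?thesis using i l r by simp
  qed
  have j2: "0 = (c00 * d02)"
  proof -
    have i: "(\<Sum>k<3. mu D 2 1 k * co D k 0 2) = (\<Sum>i<3. \<Sum>j<3. \<Sum>l<3. \<Sum>m<3. co D 2 i j * co D 1 l m * ksign j l * mu D i l 0 * mu D j m 2)" by (rule sb_dmul[OF S]) simp_all
    have l: "(\<Sum>k<3. mu D 2 1 k * co D k 0 2) = 0" by (simp add: sum3 V, (algebra)?)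
    have r: "(\<Sum>i<3. \<Sum>j<3. \<Sum>l<3. \<Sum>m<3. co D 2 i j * co D 1 l m * ksign j l * mu D i l 0 * mu D j m 2) = (c00 * d02)" by (simp add: sum3 ksign_def V, (algebra)?)
    show ?thesis using i l r by simp
  qed
  have j3: "0 = (c00 * d20)"
  proof -
    have i: "(\<Sum>k<3. mu D 2 1 k * co D k 2 0) = (\<Sum>i<3. \<Sum>j<3. \<Sum>l<3. \<Sum>m<3. co D 2 i j * co D 1 l m * ksign j l * mu D i l 2 * mu D j m 0)" by (rule sb_dmul[OF S]) simp_all
    have l: "(\<Sum>k<3. mu D 2 1 k * co D k 2 0) = 0" by (simp add: sum3 V, (algebra)?)
    have r: "(\<Sum>i<3. \<Sum>j<3. \<Sum>l<3. \<Sum>m<3. co D 2 i j * co D 1 l m * ksign j l * mu D i l 2 * mu D j m 0) = (c00 * d20)" by (simp add: sum3 ksign_def V, (algebra)?)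
    show ?thesis using i l r by simp
  qed
  have j4: "(d20 * d20) = (c00 * d21 + d20)"
  proof -
    have i: "(\<Sum>i<3. co D 2 i 0 * co D i 2 0) = (\<Sum>j<3. co D 2 2 j * co D j 0 0)" by (rule sb_coass[OF S]) simp_all
    have l: "(\<Sum>i<3. co D 2 i 0 * co D i 2 0) = (d20 * d20)" by (simp add: sum3 V, (algebra)?)
    have r: "(\<Sum>j<3. co D 2 2 j * co D j 0 0) = (c00 * d21 + d20)" by (simp add: sum3 ksign_def V, (algebra)?)
    show ?thesis using i l r by simp
  qed
  have j5: "(d12) = (c00 * d12 + c01 * d12 + c10 * d02 + c10 * d12 + c11 * d02 + c11 * d12)"
  proof -
    have i: "(\<Sum>k<3. mu D 1 2 k * co D k 1 2) = (\<Sum>i<3. \<Sum>j<3. \<Sum>l<3. \<Sum>m<3. co D 1 i j * co D 2 l m * ksign j l * mu D i l 1 * mu D j m 2)" by (rule sb_dmul[OF S]) simp_all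
    have l: "(\<Sum>k<3. mu D 1 2 k * co D k 1 2) = (d12)" by (simp add: sum3 V, (algebra)?)
    have r: "(\<Sum>i<3. \<Sum>j<3. \<Sum>l<3. \<Sum>m<3. co D 1 i j * co D 2 l m * ksign j l * mu D i l 1 * mu D j m 2) = (c00 * d12 + c01 * d12 + c10 * d02 + c10 * d12 + c11 * d02 + c11 * d12)" by (simp add: sum3 ksign_def V, (algebra)?)
    show ?thesis using i l r by simp
  qed
  have j6: "(d21) = (c00 * d21 + c01 * d20 + c01 * d21 + c10 * d21 + c11 * d20 + c11 * d21)"
  proof -
    have i: "(\<Sum>k<3. mu D 1 2 k * co D k 2 1) = (\<Sum>i<3. \<Sum>j<3. \<Sum>l<3. \<Sum>m<3. co D 1 i j * co D 2 l m * ksign j l * mu D i l 2 * mu D j m 1)" by (rule sb_dmul[OF S]) simp_all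
    have l: "(\<Sum>k<3. mu D 1 2 k * co D k 2 1) = (d21)" by (simp add: sum3 V, (algebra)?)
    have r: "(\<Sum>i<3. \<Sum>j<3. \<Sum>l<3. \<Sum>m<3. co D 1 i j * co D 2 l m * ksign j l * mu D i l 2 * mu D j m 1) = (c00 * d21 + c01 * d20 + c01 * d21 + c10 * d21 + c11 * d20 + c11 * d21)" by (simp add: sum3 ksign_def V, (algebra)?)
    show ?thesis using i l r by simp
  qed

    have "c00 * (c00 + -1) = 0" using j1 by algebra
    then have "c00 = 0 \<or> c00 = 1" by (drule_tac fac1) simp
    then have c0: "c00 = 0"
    proof
      assume h: "c00 = 1"
      then have "d02 = 0" "d20 = 0" using j2 j3 by simp_all
      then have "d21 = 1" using cr e by simp
      then show "c00 = 0" using j4 h \<open>d20 = 0\<close> by simp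
    qed
    have c: "c10 = 0" "c01 = 0" "c11 = 1" using cr e c0 by simp_all
    have d: "d02 = 0" "d20 = 0" using j5 j6 c c0 by simp_all
    have d': "d12 = 1" "d21 = 1" using cr e d by simp_all
    note W = V c0 c d d'
    show ?thesis
    proof (cases "c22 = 0")
      case True
      have "sb_iso D (model 5)" unfolding model_def
        by (simp, rule to_mk[OF S u H]) (simp_all add: all3 W True tb_def)
      then show ?thesis by force
    next
      case False
      obtain r where rr: "r * r = c22" using sqrt_ex[OF ac] by blast
      then have r0: "r \<noteq> 0" using False by auto
      let ?E = "shear D 0 1 r"
      note SE = scale_iso[OF S u r0]
      have HE: "isalg ?E mul22" by (rule scale_mu[OF S u r0 H]) (simp_all add: mul22_def bv_def)
      note CE = scale_co[OF S u r0]
      have "sb_iso ?E (model 6)" unfolding model_def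
        by (simp, rule to_mk[OF SE(2) SE(3) SE(4) HE]) (simp_all add: all3 W CE SE(5) gz[OF SE(2)] tb_def rr[symmetric] r0)
      then show ?thesis using sb_iso_trans[OF SE(1)] by force
    qed
  qed
qed

lemma stage4_23:
  assumes S: "superbialg3 (D::'a::field_char_0 sbd)" and u: "un D 0 = 1" "un D 1 = 0" and H: "isalg D mul23"
  shows "\<exists>n\<in>{1..11}. sb_iso D (model n)"
proof -
  note V0 = unit_facts[OF S u] gz[OF S] isalgD[OF H] mul23_def bv_def
  have "cu D 1 * cu D 1 = cu D 1" using sb_emul[OF S, of 1 1] by (simp add: sum3 V0)
  then have ev: "cu D 1 = 0 \<or> cu D 1 = 1" by (metis mult_cancel_right2 mult_eq_0_iff)
  define c00 where "c00 = co D 1 0 0"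
  define c01 where "c01 = co D 1 0 1"
  define c10 where "c10 = co D 1 1 0"
  define c11 where "c11 = co D 1 1 1"
  define c22 where "c22 = co D 1 2 2"
  define d02 where "d02 = co D 2 0 2"
  define d20 where "d20 = co D 2 2 0"
  define d12 where "d12 = co D 2 1 2"
  define d21 where "d21 = co D 2 2 1"
  note N = c00_def[symmetric] c01_def[symmetric] c10_def[symmetric] c11_def[symmetric] c22_def[symmetric]
    d02_def[symmetric] d20_def[symmetric] d12_def[symmetric] d21_def[symmetric]
  have cr: "c00 + cu D 1 * c10 = 0" "c01 + cu D 1 * c11 = 1" "c00 + cu D 1 * c01 = 0" "c10 + cu D 1 * c11 = 1"
    "d02 + cu D 1 * d12 = 1" "d20 + cu D 1 * d21 = 1"
    using sb_cul[OF S, of 1 0] sb_cul[OF S, of 1 1] sb_cur[OF S, of 1 0] sb_cur[OF S, of 1 1] sb_cul[OF S, of 2 2] sb_cur[OF S, of 2 2]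
    by (simp_all add: sum3 V0 N kd_def mult.commute)

  show ?thesis
  proof (cases "cu D 1 = 0")
    case True
    note e = True
    have c: "c00 = 0" "c01 = 1" "c10 = 1" "d02 = 1" "d20 = 1" using cr e by simp_all
    note V = V0 e N c
  have i1: "(c11) = (2 + 4 * c11 + c11 * c11)"
  proof -
    have i: "(\<Sum>k<3. mu D 1 1 k * co D k 1 1) = (\<Sum>i<3. \<Sum>j<3. \<Sum>l<3. \<Sum>m<3. co D 1 i j * co D 1 l m * ksign j l * mu D i l 1 * mu D j m 1)" by (rule sb_dmul[OF S]) simp_all
    have l: "(\<Sum>k<3. mu D 1 1 k * co D k 1 1) = (c11)" by (simp add: sum3 V, (algebra)?)
    have r: "(\<Sum>i<3. \<Sum>j<3. \<Sum>l<3. \<Sum>m<3. co D 1 i j * co D 1 l m * ksign j l * mu D i l 1 * mu D j m 1) = (2 + 4 * c11 + c11 * c11)" by (simp add: sum3 ksign_def V, (algebra)?)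
    show ?thesis using i l r by simp
  qed
  have i2: "(c22) = (2 * c11 * c22 + 4 * c22)"
  proof -
    have i: "(\<Sum>k<3. mu D 1 1 k * co D k 2 2) = (\<Sum>i<3. \<Sum>j<3. \<Sum>l<3. \<Sum>m<3. co D 1 i j * co D 1 l m * ksign j l * mu D i l 2 * mu D j m 2)" by (rule sb_dmul[OF S]) simp_all
    have l: "(\<Sum>k<3. mu D 1 1 k * co D k 2 2) = (c22)" by (simp add: sum3 V, (algebra)?)
    have r: "(\<Sum>i<3. \<Sum>j<3. \<Sum>l<3. \<Sum>m<3. co D 1 i j * co D 1 l m * ksign j l * mu D i l 2 * mu D j m 2) = (2 * c11 * c22 + 4 * c22)" by (simp add: sum3 ksign_def V, (algebra)?)
    show ?thesis using i l r by simp
  qed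
  have i3: "(d12) = (1 + c11 + c11 * d12 + 2 * d12)"
  proof -
    have i: "(\<Sum>k<3. mu D 1 2 k * co D k 1 2) = (\<Sum>i<3. \<Sum>j<3. \<Sum>l<3. \<Sum>m<3. co D 1 i j * co D 2 l m * ksign j l * mu D i l 1 * mu D j m 2)" by (rule sb_dmul[OF S]) simp_all
    have l: "(\<Sum>k<3. mu D 1 2 k * co D k 1 2) = (d12)" by (simp add: sum3 V, (algebra)?)
    have r: "(\<Sum>i<3. \<Sum>j<3. \<Sum>l<3. \<Sum>m<3. co D 1 i j * co D 2 l m * ksign j l * mu D i l 1 * mu D j m 2) = (1 + c11 + c11 * d12 + 2 * d12)" by (simp add: sum3 ksign_def V, (algebra)?)
    show ?thesis using i l r by simp
  qed
  have i4: "(d21) = (1 + c11 + c11 * d21 + 2 * d21)"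
  proof -
    have i: "(\<Sum>k<3. mu D 1 2 k * co D k 2 1) = (\<Sum>i<3. \<Sum>j<3. \<Sum>l<3. \<Sum>m<3. co D 1 i j * co D 2 l m * ksign j l * mu D i l 2 * mu D j m 1)" by (rule sb_dmul[OF S]) simp_all
    have l: "(\<Sum>k<3. mu D 1 2 k * co D k 2 1) = (d21)" by (simp add: sum3 V, (algebra)?)
    have r: "(\<Sum>i<3. \<Sum>j<3. \<Sum>l<3. \<Sum>m<3. co D 1 i j * co D 2 l m * ksign j l * mu D i l 2 * mu D j m 1) = (1 + c11 + c11 * d21 + 2 * d21)" by (simp add: sum3 ksign_def V, (algebra)?)
    show ?thesis using i l r by simp
  qed
  have k1: "(c11 * d12) = (d12 * d12)"
  proof -
    have i: "(\<Sum>i<3. co D 2 i 2 * co D i 1 1) = (\<Sum>j<3. co D 2 1 j * co D j 1 2)" by (rule sb_coass[OF S]) simp_all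
    have l: "(\<Sum>i<3. co D 2 i 2 * co D i 1 1) = (c11 * d12)" by (simp add: sum3 V, (algebra)?)
    have r: "(\<Sum>j<3. co D 2 1 j * co D j 1 2) = (d12 * d12)" by (simp add: sum3 ksign_def V, (algebra)?)
    show ?thesis using i l r by simp
  qed
  have k2: "(d21 * d21) = (c11 * d21)"
  proof -
    have i: "(\<Sum>i<3. co D 2 i 1 * co D i 2 1) = (\<Sum>j<3. co D 2 2 j * co D j 1 1)" by (rule sb_coass[OF S]) simp_all
    have l: "(\<Sum>i<3. co D 2 i 1 * co D i 2 1) = (d21 * d21)" by (simp add: sum3 V, (algebra)?)
    have r: "(\<Sum>j<3. co D 2 2 j * co D j 1 1) = (c11 * d21)" by (simp add: sum3 ksign_def V, (algebra)?)
    show ?thesis using i l r by simp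
  qed

    have "(c11 + 1) * (c11 + 2) = 0" using i1 by algebra
    then have c11v: "c11 = -1 \<or> c11 = -2" by (rule fac2)
    have g3: "(1 + c11) * (1 + d12) = 0" using i3 by algebra
    have c11m: "c11 = -1"
    proof (rule ccontr)
      assume h: "c11 \<noteq> -1"
      then have h2: "c11 = -2" using c11v by simp
      then have "(1 + d12) = 0" using g3 by algebra
      then have "d12 = -1" by (simp add: eq_neg_iff_add_eq_0 add.commute)
      then show False using k1 h2 by simp
    qed
    have z22: "c22 = 0" using i2 c11m by algebra
    have "d12 * (d12 + 1) = 0" using k1 c11m by algebra
    then have d12v: "d12 = 0 \<or> d12 = -1" by (rule fac1)
    have "d21 * (d21 + 1) = 0" using k2 c11m by algebra
    then have d21v: "d21 = 0 \<or> d21 = -1" by (rule fac1)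
    note W = V z22 c11m
    show ?thesis
    proof (cases "d12 = 0")
      case d1: True
      show ?thesis
      proof (cases "d21 = 0")
        case d2: True
        have "sb_iso D (model 10)" unfolding model_def
          by (simp, rule to_mk[OF S u H]) (simp_all add: all3 W d1 d2 dx0_def tb_def)
        then show ?thesis by force
      next
        case False
        then have d2: "d21 = -1" using d21v by simp
        have "sb_iso D (model 9)" unfolding model_def
          by (simp add: coop_mk, rule to_mk[OF S u H]) (simp_all add: all3 W d1 d2 dx0_def tb_def ksign_def)
        then show ?thesis by force
      qed
    next
      case False
      then have d1: "d12 = -1" using d12v by simp
      show ?thesis
      proof (cases "d21 = 0")
        case d2: True
        have "sb_iso D (model 8)" unfolding model_def
          by (simp, rule to_mk[OF S u H]) (simp_all add: all3 W d1 d2 dx0_def tb_def)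
        then show ?thesis by force
      next
        case False
        then have d2: "d21 = -1" using d21v by simp
        have "sb_iso D (model 7)" unfolding model_def
          by (simp, rule to_mk[OF S u H]) (simp_all add: all3 W d1 d2 dx0_def tb_def)
        then show ?thesis by force
      qed
    qed
  next
    case False
    then have e: "cu D 1 = 1" using ev by simp
    note V = V0 e N
  have j1: "(c00) = (c00 * c00)"
  proof -
    have i: "(\<Sum>k<3. mu D 1 1 k * co D k 0 0) = (\<Sum>i<3. \<Sum>j<3. \<Sum>l<3. \<Sum>m<3. co D 1 i j * co D 1 l m * ksign j l * mu D i l 0 * mu D j m 0)" by (rule sb_dmul[OF S]) simp_all
    have l: "(\<Sum>k<3. mu D 1 1 k * co D k 0 0) = (c00)" by (simp add: sum3 V, (algebra)?)
    have r: "(\<Sum>i<3. \<Sum>j<3. \<Sum>l<3. \<Sum>m<3. co D 1 i j * co D 1 l m * ksign j l * mu D i l 0 * mu D j m 0) = (c00 * c00)" by (simp add: sum3 ksign_def V, (algebra)?)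
    show ?thesis using i l r by simp
  qed
  have j3: "(d20) = (c00 * d20 + c10 * d20)"
  proof -
    have i: "(\<Sum>k<3. mu D 1 2 k * co D k 2 0) = (\<Sum>i<3. \<Sum>j<3. \<Sum>l<3. \<Sum>m<3. co D 1 i j * co D 2 l m * ksign j l * mu D i l 2 * mu D j m 0)" by (rule sb_dmul[OF S]) simp_all
    have l: "(\<Sum>k<3. mu D 1 2 k * co D k 2 0) = (d20)" by (simp add: sum3 V, (algebra)?)
    have r: "(\<Sum>i<3. \<Sum>j<3. \<Sum>l<3. \<Sum>m<3. co D 1 i j * co D 2 l m * ksign j l * mu D i l 2 * mu D j m 0) = (c00 * d20 + c10 * d20)" by (simp add: sum3 ksign_def V, (algebra)?)
    show ?thesis using i l r by simp
  qed
  have j4: "(d20 * d20) = (c00 * d21 + d20)"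
  proof -
    have i: "(\<Sum>i<3. co D 2 i 0 * co D i 2 0) = (\<Sum>j<3. co D 2 2 j * co D j 0 0)" by (rule sb_coass[OF S]) simp_all
    have l: "(\<Sum>i<3. co D 2 i 0 * co D i 2 0) = (d20 * d20)" by (simp add: sum3 V, (algebra)?)
    have r: "(\<Sum>j<3. co D 2 2 j * co D j 0 0) = (c00 * d21 + d20)" by (simp add: sum3 ksign_def V, (algebra)?)
    show ?thesis using i l r by simp
  qed
  have j2: "(c22) = (2 * c00 * c22 + 2 * c01 * c22 + 2 * c10 * c22 + 2 * c11 * c22)"
  proof -
    have i: "(\<Sum>k<3. mu D 1 1 k * co D k 2 2) = (\<Sum>i<3. \<Sum>j<3. \<Sum>l<3. \<Sum>m<3. co D 1 i j * co D 1 l m * ksign j l * mu D i l 2 * mu D j m 2)" by (rule sb_dmul[OF S]) simp_all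
    have l: "(\<Sum>k<3. mu D 1 1 k * co D k 2 2) = (c22)" by (simp add: sum3 V, (algebra)?)
    have r: "(\<Sum>i<3. \<Sum>j<3. \<Sum>l<3. \<Sum>m<3. co D 1 i j * co D 1 l m * ksign j l * mu D i l 2 * mu D j m 2) = (2 * c00 * c22 + 2 * c01 * c22 + 2 * c10 * c22 + 2 * c11 * c22)" by (simp add: sum3 ksign_def V, (algebra)?)
    show ?thesis using i l r by simp
  qed
  have j5: "(d12) = (c00 * d12 + c01 * d12 + c10 * d02 + c10 * d12 + c11 * d02 + c11 * d12)"
  proof -
    have i: "(\<Sum>k<3. mu D 1 2 k * co D k 1 2) = (\<Sum>i<3. \<Sum>j<3. \<Sum>l<3. \<Sum>m<3. co D 1 i j * co D 2 l m * ksign j l * mu D i l 1 * mu D j m 2)" by (rule sb_dmul[OF S]) simp_all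
    have l: "(\<Sum>k<3. mu D 1 2 k * co D k 1 2) = (d12)" by (simp add: sum3 V, (algebra)?)
    have r: "(\<Sum>i<3. \<Sum>j<3. \<Sum>l<3. \<Sum>m<3. co D 1 i j * co D 2 l m * ksign j l * mu D i l 1 * mu D j m 2) = (c00 * d12 + c01 * d12 + c10 * d02 + c10 * d12 + c11 * d02 + c11 * d12)" by (simp add: sum3 ksign_def V, (algebra)?)
    show ?thesis using i l r by simp
  qed
  have j6: "(d21) = (c00 * d21 + c01 * d20 + c01 * d21 + c10 * d21 + c11 * d20 + c11 * d21)"
  proof -
    have i: "(\<Sum>k<3. mu D 1 2 k * co D k 2 1) = (\<Sum>i<3. \<Sum>j<3. \<Sum>l<3. \<Sum>m<3. co D 1 i j * co D 2 l m * ksign j l * mu D i l 2 * mu D j m 1)" by (rule sb_dmul[OF S]) simp_all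
    have l: "(\<Sum>k<3. mu D 1 2 k * co D k 2 1) = (d21)" by (simp add: sum3 V, (algebra)?)
    have r: "(\<Sum>i<3. \<Sum>j<3. \<Sum>l<3. \<Sum>m<3. co D 1 i j * co D 2 l m * ksign j l * mu D i l 2 * mu D j m 1) = (c00 * d21 + c01 * d20 + c01 * d21 + c10 * d21 + c11 * d20 + c11 * d21)" by (simp add: sum3 ksign_def V, (algebra)?)
    show ?thesis using i l r by simp
  qed

    have "c00 * (c00 + -1) = 0" using j1 by algebra
    then have "c00 = 0 \<or> c00 = 1" by (drule_tac fac1) simp
    then have c0: "c00 = 0"
    proof
      assume h: "c00 = 1"
      then have "c10 = -1" using cr e by (simp add: eq_neg_iff_add_eq_0 add.commute)
      then have "d20 = 0" using j3 h by simp
      then have "d21 = 1" using cr e by simp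
      then show "c00 = 0" using j4 h \<open>d20 = 0\<close> by simp
    qed
    have c: "c10 = 0" "c01 = 0" "c11 = 1" using cr e c0 by simp_all
    have z22: "c22 = 0" using j2 c c0 by simp
    have d: "d02 = 0" "d20 = 0" using j5 j6 c c0 by simp_all
    have d': "d12 = 1" "d21 = 1" using cr e d by simp_all
    note W = V c0 c d d' z22
    have "sb_iso D (model 11)" unfolding model_def
      by (simp, rule to_mk[OF S u H]) (simp_all add: all3 W tb_def)
    then show ?thesis by force
  qed
qed

lemma classify:
  assumes SA: "superbialg3 (A::'a::field_char_0 sbd)"
    and ac: "\<forall>p :: 'a poly. degree p > 0 \<longrightarrow> (\<exists>z. poly p z = 0)"
  shows "\<exists>n\<in>{1..11}. sb_iso A (model n)"
proof -
  obtain B where B: "sb_iso A B" "superbialg3 B" "un B 0 = 1" "un B 1 = 0" using stage1[OF SA] by blast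
  obtain C where C: "sb_iso B C" "superbialg3 C" "un C 0 = 1" "un C 1 = 0" "mu C 1 1 0 = 0"
    "mu C 1 1 1 = 1 \<or> mu C 1 1 1 = 0" using stage2[OF B(2-4) ac] by blast
  have C1: "mu C 1 1 1 = 1" using nil_contra[OF C(2-5)] C(6) by blast
  obtain D where D: "sb_iso C D" "superbialg3 D" "un D 0 = 1" "un D 1 = 0"
    "isalg D mul21 \<or> isalg D mul22 \<or> isalg D mul23" using stage3[OF C(2-5) C1 ac] by blast
  have "\<exists>n\<in>{1..11}. sb_iso D (model n)"
    using D(5) stage4_21[OF D(2-4)] stage4_22[OF D(2-4) _ ac] stage4_23[OF D(2-4)] by blast
  then obtain n where "n \<in> {1..11}" "sb_iso D (model n)" by blast
  moreover have "sb_iso A D" using sb_iso_trans[OF sb_iso_trans[OF B(1) C(1)] D(1)] .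
  ultimately show ?thesis using sb_iso_trans by blast
qed

lemma nf_iso_inv:
  assumes iso: "sb_iso B (C::'a::field sbd)" and SB: "superbialg3 B" and SC: "superbialg3 C"
    and uB: "un B 0 = 1" "un B 1 = 0" and uC: "un C 0 = 1" "un C 1 = 0"
    and xB: "mu B 1 1 0 = 0" "mu B 1 1 1 = 1" "mu B 1 2 2 = 1"
    and xC: "mu C 1 1 0 = 0" "mu C 1 1 1 = 1" "mu C 1 2 2 = 1"
  shows "(mu B 2 1 2 = 0) = (mu C 2 1 2 = 0)" "(mu B 2 2 1 = 0) = (mu C 2 2 1 = 0)"
    "(cu B 1 = 0) = (cu C 1 = 0)" "(co B 2 1 2 = 0) = (co C 2 1 2 = 0)"
    "(co B 2 2 1 = 0) = (co C 2 2 1 = 0)" "(co B 1 2 2 = 0) = (co C 1 2 2 = 0)"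
proof -
  obtain P Q where "evenM P" "inv3 P Q" "isoM B C P" using iso unfolding sb_iso_iff by blast
  then interpret isoctx B C P Q by unfold_locales
  note FB = unit_facts[OF SB uB] gz[OF SB] xB
  note FC = unit_facts[OF SC uC] gz[OF SC] xC
  have p0: "P 0 0 = 1" "P 0 1 = 0" using Ur[of 0] Ur[of 1] FB uB uC Pz by (simp_all add: sum3)
  have p22: "Q 2 2 * P 2 2 = 1" using QP[of 2 2] Pz by (simp add: sum3 kd_def)
  then have p2: "P 2 2 \<noteq> 0" by auto
  have m1: "P 1 0 * P 1 0 = P 1 0" using Mr[of 1 1 0] FB FC Pz by (simp add: sum3)
  have m2: "P 2 2 * (P 1 0 + P 1 1) = P 2 2" using Mr[of 1 2 2] FB FC Pz by (simp add: sum3 algebra_simps)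
  then have m2': "P 1 0 + P 1 1 = 1" using p2 by simp
  have p10: "P 1 0 = 0"
  proof (rule ccontr)
    assume h: "P 1 0 \<noteq> 0"
    then have "P 1 0 = 1" using m1 by (metis mult_cancel_right2)
    then have "P 1 1 = 0" using m2' by simp
    then have "Q 0 0 = 0" using PQ[of 1 0] \<open>P 1 0 = 1\<close> Pz by (simp add: sum3 kd_def)
    moreover have "Q 0 0 = 1" using PQ[of 0 0] p0 Pz by (simp add: sum3 kd_def)
    ultimately show False by simp
  qed
  then have p11: "P 1 1 = 1" using m2' by simp
  note PP = p0 p10 p11 Pz
  show "(mu B 2 1 2 = 0) = (mu C 2 1 2 = 0)" using Mr[of 2 1 2] FB FC PP p2 by (simp add: sum3)
  have "mu B 2 2 1 = P 2 2 * P 2 2 * mu C 2 2 1" using Mr[of 2 2 1] FB FC PP by (simp add: sum3)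
  then show "(mu B 2 2 1 = 0) = (mu C 2 2 1 = 0)" using p2 by auto
  have "cu C 1 = cu B 1" using Er[of 1] FB FC PP by (simp add: sum3)
  then show "(cu B 1 = 0) = (cu C 1 = 0)" by simp
  show "(co B 2 1 2 = 0) = (co C 2 1 2 = 0)" using Cr[of 2 1 2] FB FC PP p2 by (simp add: sum3)
  show "(co B 2 2 1 = 0) = (co C 2 2 1 = 0)" using Cr[of 2 2 1] FB FC PP p2 by (simp add: sum3)
  have "co B 1 2 2 * P 2 2 * P 2 2 = co C 1 2 2" using Cr[of 1 2 2] FB FC PP by (simp add: sum3)
  then show "(co B 1 2 2 = 0) = (co C 1 2 2 = 0)" using p2 by auto
qed

definition invt :: "'a::field sbd \<Rightarrow> bool list" where
  "invt B = [mu B 2 1 2 = 0, mu B 2 2 1 = 0, cu B 1 = 0, co B 2 1 2 = 0, co B 2 2 1 = 0, co B 1 2 2 = 0]"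

lemma model_basic: assumes "n \<in> {1..11}" shows "un (model n :: 'a::field sbd) 0 = 1 \<and> un (model n :: 'a sbd) 1 = 0 \<and>
   mu (model n :: 'a sbd) 1 1 0 = 0 \<and> mu (model n :: 'a sbd) 1 1 1 = 1 \<and> mu (model n :: 'a sbd) 1 2 2 = 1"
  using upto11[OF assms] by (elim disjE) (simp_all add: model_def mk_def coop_def mul21_def mul22_def mul23_def bv_def)

lemma invt1: "invt (model 1 :: 'a::field_char_0 sbd) = [False, False, True, True, False, True]"
  by (simp add: invt_def model_def mk_def coop_def mul21_def mul22_def mul23_def bv_def tb_def dx0_def ksign_def)
lemma invt2: "invt (model 2 :: 'a::field_char_0 sbd) = [False, False, True, False, True, True]"
  by (simp add: invt_def model_def mk_def coop_def mul21_def mul22_def mul23_def bv_def tb_def dx0_def ksign_def)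
lemma invt3: "invt (model 3 :: 'a::field_char_0 sbd) = [True, True, True, False, False, True]"
  by (simp add: invt_def model_def mk_def coop_def mul21_def mul22_def mul23_def bv_def tb_def dx0_def ksign_def)
lemma invt4: "invt (model 4 :: 'a::field_char_0 sbd) = [True, True, True, False, False, False]"
  by (simp add: invt_def model_def mk_def coop_def mul21_def mul22_def mul23_def bv_def tb_def dx0_def ksign_def)
lemma invt5: "invt (model 5 :: 'a::field_char_0 sbd) = [True, True, False, False, False, True]"
  by (simp add: invt_def model_def mk_def coop_def mul21_def mul22_def mul23_def bv_def tb_def dx0_def ksign_def)
lemma invt6: "invt (model 6 :: 'a::field_char_0 sbd) = [True, True, False, False, False, False]"
  by (simp add: invt_def model_def mk_def coop_def mul21_def mul22_def mul23_def bv_def tb_def dx0_def ksign_def)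
lemma invt7: "invt (model 7 :: 'a::field_char_0 sbd) = [False, True, True, False, False, True]"
  by (simp add: invt_def model_def mk_def coop_def mul21_def mul22_def mul23_def bv_def tb_def dx0_def ksign_def)
lemma invt8: "invt (model 8 :: 'a::field_char_0 sbd) = [False, True, True, False, True, True]"
  by (simp add: invt_def model_def mk_def coop_def mul21_def mul22_def mul23_def bv_def tb_def dx0_def ksign_def)
lemma invt9: "invt (model 9 :: 'a::field_char_0 sbd) = [False, True, True, True, False, True]"
  by (simp add: invt_def model_def mk_def coop_def mul21_def mul22_def mul23_def bv_def tb_def dx0_def ksign_def)
lemma invt10: "invt (model 10 :: 'a::field_char_0 sbd) = [False, True, True, True, True, True]"
  by (simp add: invt_def model_def mk_def coop_def mul21_def mul22_def mul23_def bv_def tb_def dx0_def ksign_def)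
lemma invt11: "invt (model 11 :: 'a::field_char_0 sbd) = [False, True, False, False, False, True]"
  by (simp add: invt_def model_def mk_def coop_def mul21_def mul22_def mul23_def bv_def tb_def dx0_def ksign_def)

lemmas invts = invt1 invt2 invt3 invt4 invt5 invt6 invt7 invt8 invt9 invt10 invt11

lemma models_noniso:
  assumes n: "n \<in> {1..11}" and m: "m \<in> {1..11}" and iso: "sb_iso (model n :: 'a::field_char_0 sbd) (model m)"
  shows "n = m"
proof -
  note bn = model_basic[OF n, where 'a='a] and bm = model_basic[OF m, where 'a='a]
  have "invt (model n :: 'a sbd) = invt (model m :: 'a sbd)"
    using nf_iso_inv[OF iso models_sb[OF n] models_sb[OF m]] bn bm unfolding invt_def by simp
  then show ?thesis using upto11[OF n] upto11[OF m] by (elim disjE) (simp_all add: invts)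
qed

theorem theorem3p5:
  fixes dummy :: "'a::field_char_0 itself"
  assumes alg_closed: "\<forall>p :: 'a poly. degree p > 0 \<longrightarrow> (\<exists>z. poly p z = 0)"
  shows "(\<forall>n\<in>{1..11::nat}. superbialg3 (model n :: 'a sbd)) \<and>
         (\<forall>n\<in>{1..11::nat}. \<forall>m\<in>{1..11::nat}.
             sb_iso (model n :: 'a sbd) (model m) \<longrightarrow> n = m) \<and>
         (\<forall>A :: 'a sbd. superbialg3 A \<longrightarrow> (\<exists>!n. n \<in> {1..11} \<and> sb_iso A (model n)))"
proof (intro conjI ballI allI impI)
  fix n :: nat assume "n \<in> {1..11}"
  then show "superbialg3 (model n :: 'a sbd)" by (rule models_sb)
next
  fix n m :: nat assume "n \<in> {1..11}" "m \<in> {1..11}" "sb_iso (model n :: 'a sbd) (model m)"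
  then show "n = m" by (rule models_noniso)
next
  fix A :: "'a sbd" assume SA: "superbialg3 A"
  obtain n where n: "n \<in> {1..11}" "sb_iso A (model n)" using classify[OF SA alg_closed] by blast
  show "\<exists>!n. n \<in> {1..11} \<and> sb_iso A (model n)"
  proof (rule ex1I[of _ n])
    show "n \<in> {1..11} \<and> sb_iso A (model n)" using n by blast
  next
    fix m assume m: "m \<in> {1..11} \<and> sb_iso A (model m)"
    have "sb_iso (model m) (model n :: 'a sbd)" using sb_iso_trans[OF sb_iso_sym[of A "model m"] n(2)] m by blast
    then show "m = n" using models_noniso m n(1) by blast
  qed
qed

end
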